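(* Let $\beta>2\alpha>0$ with $\beta+2\alpha<1$, let $t\in\mathbb{R}^{s_N}$, and let $Z\sim\mathcal{N}(0,A^{-1})$ be independent of $\widetilde m=\sqrt{N/s_N}\,m$, where $m$ is distributed according to the Gibbs measure. Then $$\mathbb{E}\big[\exp\{t^T(Z+\widetilde m)\}\big]=\mathbb{E}_{\rho_N}\big[\exp\{t^T(A-A^2)^{-1/2}X\}\big],$$ where $X$ is an $s_N$-dimensional random variable whose distribution is strongly log-concave with density $$\rho_N(x)\propto\exp\Big\{-\tfrac12\|x\|^2+\tfrac{N}{s_N}\sum_{k=1}^{s_N}G\Big(\sqrt{\tfrac{s_N}{N}}(Cx)_k\Big)\Big\},$$ with $G(y)=\log\cosh(y)-\frac{y^2}{2}$ and $C=A(A-A^2)^{-1/2}=A^{1/2}(I-A)^{-1/2}$.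
   Context: Let $(s_N)$ be a non-decreasing sequence of positive integers with $s_N$ dividing $N$; $\{1,\dots,N\}$ is partitioned into blocks $S_1,\dots,S_{s_N}$ of size $N/s_N$, block indices cyclic. For $\sigma\in\{-1,+1\}^N$, $m_k=\frac{s_N}{N}\sum_{i\in S_k}\sigma_i$, $m=(m_1,\dots,m_{s_N})$. $A=\beta I+\alpha(P+P^T)$ with $P$ the $s_N\times s_N$ cyclic shift matrix. The Gibbs measure is $\mu_{N,\beta,\alpha}(\sigma)=Z_{N,\beta,\alpha}^{-1}\exp\{\frac{N}{2s_N}m^TAm\}2^{-N}$ on $\{-1,+1\}^N$. A distribution is strongly log-concave if it has a density $e^{-U}$ with $U$ strongly convex. *)

theory Defs
  imports "HOL-Probability.Probability"
begin

text \<open>Vectors in R^s are functions nat => real (only indices < s matter);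
 s x s matrices are functions nat => nat => real vanishing outside {..<s} x {..<s}.\<close>

definition is_mat :: "nat \<Rightarrow> (nat \<Rightarrow> nat \<Rightarrow> real) \<Rightarrow> bool" where
  "is_mat s M \<longleftrightarrow> (\<forall>i j. \<not> (i < s \<and> j < s) \<longrightarrow> M i j = 0)"

definition id_mat :: "nat \<Rightarrow> nat \<Rightarrow> nat \<Rightarrow> real" where
  "id_mat s = (\<lambda>i j. if i < s \<and> j < s \<and> i = j then 1 else 0)"

definition mat_add :: "nat \<Rightarrow> (nat \<Rightarrow> nat \<Rightarrow> real) \<Rightarrow> (nat \<Rightarrow> nat \<Rightarrow> real) \<Rightarrow> nat \<Rightarrow> nat \<Rightarrow> real" where
  "mat_add s M K = (\<lambda>i j. if i < s \<and> j < s then M i j + K i j else 0)"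

definition mat_sub :: "nat \<Rightarrow> (nat \<Rightarrow> nat \<Rightarrow> real) \<Rightarrow> (nat \<Rightarrow> nat \<Rightarrow> real) \<Rightarrow> nat \<Rightarrow> nat \<Rightarrow> real" where
  "mat_sub s M K = (\<lambda>i j. if i < s \<and> j < s then M i j - K i j else 0)"

definition mat_smult :: "nat \<Rightarrow> real \<Rightarrow> (nat \<Rightarrow> nat \<Rightarrow> real) \<Rightarrow> nat \<Rightarrow> nat \<Rightarrow> real" where
  "mat_smult s c M = (\<lambda>i j. if i < s \<and> j < s then c * M i j else 0)"

definition mat_transp :: "(nat \<Rightarrow> nat \<Rightarrow> real) \<Rightarrow> nat \<Rightarrow> nat \<Rightarrow> real" where
  "mat_transp M = (\<lambda>i j. M j i)"

definition mat_mul :: "nat \<Rightarrow> (nat \<Rightarrow> nat \<Rightarrow> real) \<Rightarrow> (nat \<Rightarrow> nat \<Rightarrow> real) \<Rightarrow> nat \<Rightarrow> nat \<Rightarrow> real" where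
  "mat_mul s M K = (\<lambda>i j. if i < s \<and> j < s then (\<Sum>k<s. M i k * K k j) else 0)"

text \<open>Matrix-vector product, as an element of the product space (extensional on {..<s}).\<close>
definition mat_vec :: "nat \<Rightarrow> (nat \<Rightarrow> nat \<Rightarrow> real) \<Rightarrow> (nat \<Rightarrow> real) \<Rightarrow> nat \<Rightarrow> real" where
  "mat_vec s M x = restrict (\<lambda>i. \<Sum>j<s. M i j * x j) {..<s}"

definition mat_sym :: "nat \<Rightarrow> (nat \<Rightarrow> nat \<Rightarrow> real) \<Rightarrow> bool" where
  "mat_sym s M \<longleftrightarrow> (\<forall>i<s. \<forall>j<s. M i j = M j i)"

definition pos_def :: "nat \<Rightarrow> (nat \<Rightarrow> nat \<Rightarrow> real) \<Rightarrow> bool" where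
  "pos_def s M \<longleftrightarrow> (\<forall>x::nat \<Rightarrow> real. (\<exists>i<s. x i \<noteq> 0) \<longrightarrow> 0 < (\<Sum>i<s. \<Sum>j<s. x i * M i j * x j))"

definition mat_inv :: "nat \<Rightarrow> (nat \<Rightarrow> nat \<Rightarrow> real) \<Rightarrow> nat \<Rightarrow> nat \<Rightarrow> real" where
  "mat_inv s M = (THE K. is_mat s K \<and> mat_mul s M K = id_mat s)"

definition mat_sqrt :: "nat \<Rightarrow> (nat \<Rightarrow> nat \<Rightarrow> real) \<Rightarrow> nat \<Rightarrow> nat \<Rightarrow> real" where
  "mat_sqrt s M = (THE K. is_mat s K \<and> mat_sym s K \<and> pos_def s K \<and> mat_mul s K K = M)"

definition cyc_shift :: "nat \<Rightarrow> nat \<Rightarrow> nat \<Rightarrow> real" where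
  "cyc_shift s = (\<lambda>i j. if i < s \<and> j < s \<and> j = Suc i mod s then 1 else 0)"

definition coupling_mat :: "nat \<Rightarrow> real \<Rightarrow> real \<Rightarrow> nat \<Rightarrow> nat \<Rightarrow> real" where
  "coupling_mat s \<beta> \<alpha> = mat_add s (mat_smult s \<beta> (id_mat s))
      (mat_smult s \<alpha> (mat_add s (cyc_shift s) (mat_transp (cyc_shift s))))"

definition spins :: "nat \<Rightarrow> (nat \<Rightarrow> real) set" where
  "spins N = PiE {..<N} (\<lambda>_. {-1, 1})"

definition block :: "nat \<Rightarrow> nat \<Rightarrow> nat \<Rightarrow> nat set" where
  "block N s k = {k * (N div s) ..< Suc k * (N div s)}"

definition magn :: "nat \<Rightarrow> nat \<Rightarrow> (nat \<Rightarrow> real) \<Rightarrow> nat \<Rightarrow> real" where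
  "magn N s \<sigma> k = (real s / real N) * (\<Sum>i\<in>block N s k. \<sigma> i)"

definition gibbs_weight :: "nat \<Rightarrow> nat \<Rightarrow> (nat \<Rightarrow> nat \<Rightarrow> real) \<Rightarrow> (nat \<Rightarrow> real) \<Rightarrow> real" where
  "gibbs_weight N s A \<sigma> =
     exp (real N / (2 * real s) * (\<Sum>k<s. \<Sum>l<s. magn N s \<sigma> k * A k l * magn N s \<sigma> l)) * (1/2) ^ N"

definition gibbs_prob :: "nat \<Rightarrow> nat \<Rightarrow> (nat \<Rightarrow> nat \<Rightarrow> real) \<Rightarrow> (nat \<Rightarrow> real) \<Rightarrow> real" where
  "gibbs_prob N s A \<sigma> = gibbs_weight N s A \<sigma> / (\<Sum>\<tau>\<in>spins N. gibbs_weight N s A \<tau>)"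

definition lebesgue_vec :: "nat \<Rightarrow> (nat \<Rightarrow> real) measure" where
  "lebesgue_vec s = PiM {..<s} (\<lambda>_. lborel)"

definition std_gauss_vec :: "nat \<Rightarrow> (nat \<Rightarrow> real) measure" where
  "std_gauss_vec s = PiM {..<s} (\<lambda>_. density lborel std_normal_density)"

text \<open>Centered Gaussian N(0, Sigma) on R^s: law of Sigma^{1/2} W with W standard normal.\<close>
definition gauss_vec :: "nat \<Rightarrow> (nat \<Rightarrow> nat \<Rightarrow> real) \<Rightarrow> (nat \<Rightarrow> real) measure" where
  "gauss_vec s \<Sigma> = distr (std_gauss_vec s) (lebesgue_vec s) (mat_vec s (mat_sqrt s \<Sigma>))"

definition G_fun :: "real \<Rightarrow> real" where
  "G_fun y = ln (cosh y) - y\<^sup>2 / 2"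

definition rho_unnorm :: "nat \<Rightarrow> nat \<Rightarrow> (nat \<Rightarrow> nat \<Rightarrow> real) \<Rightarrow> (nat \<Rightarrow> real) \<Rightarrow> real" where
  "rho_unnorm N s C x = exp (- (1/2) * (\<Sum>i<s. (x i)\<^sup>2)
      + real N / real s * (\<Sum>k<s. G_fun (sqrt (real s / real N) * (\<Sum>j<s. C k j * x j))))"

definition strongly_convex :: "nat \<Rightarrow> ((nat \<Rightarrow> real) \<Rightarrow> real) \<Rightarrow> bool" where
  "strongly_convex s U \<longleftrightarrow> (\<exists>c>0. \<forall>x y. \<forall>\<theta>\<in>{0..1}.
      U (\<lambda>i. \<theta> * x i + (1 - \<theta>) * y i)
        \<le> \<theta> * U x + (1 - \<theta>) * U y - c / 2 * \<theta> * (1 - \<theta>) * (\<Sum>i<s. (x i - y i)\<^sup>2))"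

end

theory Submission
  imports Defs "HOL-Computational_Algebra.Formal_Power_Series"
begin

lemma is_mat_mat_mul[simp]: "is_mat s (mat_mul s M K)"
  by (simp add: is_mat_def mat_mul_def)
lemma is_mat_id[simp]: "is_mat s (id_mat s)"
  by (simp add: is_mat_def id_mat_def)
lemma is_mat_add[simp]: "is_mat s (mat_add s M K)"
  by (simp add: is_mat_def mat_add_def)
lemma is_mat_sub[simp]: "is_mat s (mat_sub s M K)"
  by (simp add: is_mat_def mat_sub_def)
lemma is_mat_smult[simp]: "is_mat s (mat_smult s c M)"
  by (simp add: is_mat_def mat_smult_def)

lemma mat_mul_assoc: "mat_mul s (mat_mul s M K) L = mat_mul s M (mat_mul s K L)"
proof (intro ext)
  fix i j
  show "mat_mul s (mat_mul s M K) L i j = mat_mul s M (mat_mul s K L) i j"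
  proof (cases "i < s \<and> j < s")
    case True
    have "mat_mul s (mat_mul s M K) L i j = (\<Sum>k<s. (\<Sum>l<s. M i l * K l k) * L k j)"
      using True by (simp add: mat_mul_def)
    also have "\<dots> = (\<Sum>k<s. \<Sum>l<s. M i l * K l k * L k j)" by (simp add: sum_distrib_right)
    also have "\<dots> = (\<Sum>l<s. \<Sum>k<s. M i l * K l k * L k j)" by (rule sum.swap)
    also have "\<dots> = (\<Sum>l<s. M i l * (\<Sum>k<s. K l k * L k j))" by (simp add: sum_distrib_left mult.assoc)
    also have "\<dots> = mat_mul s M (mat_mul s K L) i j" using True by (simp add: mat_mul_def)
    finally show ?thesis .
  qed (auto simp: mat_mul_def)
qed

lemma is_mat_eqI: "is_mat s M \<Longrightarrow> is_mat s K \<Longrightarrow> (\<And>i j. i < s \<Longrightarrow> j < s \<Longrightarrow> M i j = K i j) \<Longrightarrow> M = K"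
  by (intro ext) (metis is_mat_def)

lemma mat_mul_id_left: assumes "is_mat s M" shows "mat_mul s (id_mat s) M = M"
proof (rule is_mat_eqI[OF _ assms])
  fix i j assume ij: "i < s" "j < s"
  have "mat_mul s (id_mat s) M i j = (\<Sum>k<s. (if i = k then 1 else 0) * M k j)"
    using ij by (simp add: mat_mul_def id_mat_def)
  also have "\<dots> = (\<Sum>k<s. if k = i then M k j else 0)" by (rule sum.cong) auto
  finally have "mat_mul s (id_mat s) M i j = (\<Sum>k<s. if k = i then M k j else 0)" .
  then show "mat_mul s (id_mat s) M i j = M i j" using ij by simp
qed simp

lemma mat_mul_id_right: assumes "is_mat s M" shows "mat_mul s M (id_mat s) = M"
proof (rule is_mat_eqI[OF _ assms])
  fix i j assume ij: "i < s" "j < s"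
  have "mat_mul s M (id_mat s) i j = (\<Sum>k<s. M i k * (if k = j then 1 else 0))"
    using ij by (simp add: mat_mul_def id_mat_def)
  also have "\<dots> = (\<Sum>k<s. if k = j then M i k else 0)" by (rule sum.cong) auto
  finally have "mat_mul s M (id_mat s) i j = (\<Sum>k<s. if k = j then M i k else 0)" .
  then show "mat_mul s M (id_mat s) i j = M i j" using ij by simp
qed simp

primrec mpow :: "nat \<Rightarrow> (nat \<Rightarrow> nat \<Rightarrow> real) \<Rightarrow> nat \<Rightarrow> nat \<Rightarrow> nat \<Rightarrow> real" where
  "mpow s B 0 = id_mat s"
| "mpow s B (Suc k) = mat_mul s B (mpow s B k)"

lemma is_mat_mpow[simp]: "is_mat s (mpow s B k)"
  by (cases k) auto

lemma mpow_add: "mat_mul s (mpow s B k) (mpow s B l) = mpow s B (k + l)"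
  by (induct k) (simp_all add: mat_mul_id_left mat_mul_assoc)

lemma mpow_1: "is_mat s B \<Longrightarrow> mpow s B 1 = B"
  by (simp add: mat_mul_id_right)

lemma mpow_sym: assumes "is_mat s B" "mat_sym s B" shows "mat_sym s (mpow s B k)"
proof (induct k)
  case 0 then show ?case by (simp add: mat_sym_def id_mat_def)
next
  case (Suc k)
  have e: "mpow s B (Suc k) = mat_mul s (mpow s B k) B"
    using mpow_add[of s B k 1] mpow_1[OF assms(1)] by simp
  show ?case unfolding mat_sym_def
  proof (intro allI impI)
    fix i j assume ij: "i < s" "j < s"
    have "mpow s B (Suc k) i j = (\<Sum>m<s. B i m * mpow s B k m j)" using ij by (simp add: mat_mul_def)
    also have "\<dots> = (\<Sum>m<s. mpow s B k j m * B m i)"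
      using Suc assms(2) ij by (intro sum.cong) (auto simp: mat_sym_def mult.commute)
    also have "\<dots> = mpow s B (Suc k) j i" using ij by (subst e) (simp add: mat_mul_def)
    finally show "mpow s B (Suc k) i j = mpow s B (Suc k) j i" .
  qed
qed

definition rb :: "nat \<Rightarrow> (nat \<Rightarrow> nat \<Rightarrow> real) \<Rightarrow> real \<Rightarrow> bool" where
  "rb s M r \<longleftrightarrow> (\<forall>i<s. (\<Sum>j<s. \<bar>M i j\<bar>) \<le> r)"

lemma rb_mul: assumes "rb s M r1" "rb s K r2" "0 \<le> r2" shows "rb s (mat_mul s M K) (r1 * r2)"
  unfolding rb_def
proof (intro allI impI)
  fix i assume i: "i < s"
  have "(\<Sum>j<s. \<bar>mat_mul s M K i j\<bar>) = (\<Sum>j<s. \<bar>\<Sum>m<s. M i m * K m j\<bar>)"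
    using i by (simp add: mat_mul_def)
  also have "\<dots> \<le> (\<Sum>j<s. \<Sum>m<s. \<bar>M i m\<bar> * \<bar>K m j\<bar>)"
    by (intro sum_mono) (metis (no_types, lifting) abs_mult sum.cong sum_abs)
  also have "\<dots> = (\<Sum>m<s. \<bar>M i m\<bar> * (\<Sum>j<s. \<bar>K m j\<bar>))"
    by (subst sum.swap) (simp add: sum_distrib_left)
  also have "\<dots> \<le> (\<Sum>m<s. \<bar>M i m\<bar> * r2)"
    using assms(2) by (intro sum_mono mult_left_mono) (auto simp: rb_def)
  also have "\<dots> = (\<Sum>m<s. \<bar>M i m\<bar>) * r2" by (simp add: sum_distrib_right)
  also have "\<dots> \<le> r1 * r2" using assms(1,3) i by (intro mult_right_mono) (auto simp: rb_def)
  finally show "(\<Sum>j<s. \<bar>mat_mul s M K i j\<bar>) \<le> r1 * r2" .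
qed

lemma rb_id: "rb s (id_mat s) 1"
  by (auto simp: rb_def id_mat_def if_distrib cong: if_cong)

lemma rb_mpow: "rb s B r \<Longrightarrow> 0 \<le> r \<Longrightarrow> rb s (mpow s B k) (r ^ k)"
  by (induct k) (auto simp: rb_id intro!: rb_mul zero_le_power)

lemma rb_entry: assumes "rb s M r" "is_mat s M" "0 \<le> r" shows "\<bar>M i j\<bar> \<le> r"
proof (cases "i < s \<and> j < s")
  case True
  then have "\<bar>M i j\<bar> \<le> (\<Sum>j<s. \<bar>M i j\<bar>)" by (intro member_le_sum) auto
  then show ?thesis using assms True by (auto simp: rb_def)
next
  case False then show ?thesis using assms by (auto simp: is_mat_def)
qed

definition msum :: "nat \<Rightarrow> (nat \<Rightarrow> real) \<Rightarrow> (nat \<Rightarrow> nat \<Rightarrow> real) \<Rightarrow> nat \<Rightarrow> nat \<Rightarrow> real" where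
  "msum s a B = (\<lambda>i j. \<Sum>k. a k * mpow s B k i j)"

lemma msum_summable:
  assumes "rb s B r" "0 \<le> r" "summable (\<lambda>k. \<bar>a k\<bar> * r ^ k)"
  shows "summable (\<lambda>k. norm (a k * mpow s B k i j))"
proof (rule summable_comparison_test'[OF assms(3), where N=0])
  fix k :: nat
  have "\<bar>mpow s B k i j\<bar> \<le> r ^ k" using rb_mpow[OF assms(1,2)] assms(2) by (intro rb_entry) (auto intro: zero_le_power)
  then show "norm (norm (a k * mpow s B k i j)) \<le> \<bar>a k\<bar> * r ^ k"
    by (simp add: abs_mult mult_left_mono)
qed

lemma is_mat_msum[simp]: "is_mat s (msum s a B)"
  using is_mat_mpow by (simp add: is_mat_def msum_def)

lemma msum_sym: "is_mat s B \<Longrightarrow> mat_sym s B \<Longrightarrow> mat_sym s (msum s a B)"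
  using mpow_sym by (simp add: mat_sym_def msum_def)

lemma msum_mul:
  assumes "rb s B r" "0 \<le> r" "summable (\<lambda>k. \<bar>a k\<bar> * r ^ k)" "summable (\<lambda>k. \<bar>b k\<bar> * r ^ k)"
  shows "mat_mul s (msum s a B) (msum s b B) = msum s (\<lambda>n. \<Sum>k\<le>n. a k * b (n - k)) B"
proof (rule is_mat_eqI)
  fix i j assume ij: "i < s" "j < s"
  let ?P = "mpow s B"
  have "mat_mul s (msum s a B) (msum s b B) i j =
     (\<Sum>m<s. (\<Sum>k. a k * ?P k i m) * (\<Sum>k. b k * ?P k m j))"
    using ij by (simp add: mat_mul_def msum_def)
  also have "\<dots> = (\<Sum>m<s. \<Sum>n. \<Sum>k\<le>n. (a k * ?P k i m) * (b (n - k) * ?P (n - k) m j))"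
    by (intro sum.cong refl Cauchy_product msum_summable[OF assms(1,2,3)] msum_summable[OF assms(1,2,4)])
  also have "\<dots> = (\<Sum>n. \<Sum>m<s. \<Sum>k\<le>n. (a k * ?P k i m) * (b (n - k) * ?P (n - k) m j))"
    by (intro suminf_sum[symmetric] summable_Cauchy_product msum_summable[OF assms(1,2,3)] msum_summable[OF assms(1,2,4)])
  also have "\<dots> = (\<Sum>n. (\<Sum>k\<le>n. a k * b (n - k)) * ?P n i j)"
  proof (intro suminf_cong)
    fix n
    have "(\<Sum>m<s. \<Sum>k\<le>n. (a k * ?P k i m) * (b (n - k) * ?P (n - k) m j))
        = (\<Sum>k\<le>n. a k * b (n - k) * (\<Sum>m<s. ?P k i m * ?P (n - k) m j))"
      by (subst sum.swap) (simp add: sum_distrib_left algebra_simps)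
    also have "\<dots> = (\<Sum>k\<le>n. a k * b (n - k) * ?P n i j)"
    proof (intro sum.cong refl)
      fix k assume "k \<in> {..n}"
      then have "k + (n - k) = n" by simp
      then have "mat_mul s (?P k) (?P (n - k)) i j = ?P n i j" by (simp add: mpow_add)
      then show "a k * b (n - k) * (\<Sum>m<s. ?P k i m * ?P (n - k) m j) = a k * b (n - k) * ?P n i j"
        using ij by (simp add: mat_mul_def)
    qed
    also have "\<dots> = (\<Sum>k\<le>n. a k * b (n - k)) * ?P n i j" by (simp add: sum_distrib_right)
    finally show "(\<Sum>m<s. \<Sum>k\<le>n. (a k * ?P k i m) * (b (n - k) * ?P (n - k) m j))
        = (\<Sum>k\<le>n. a k * b (n - k)) * ?P n i j" .
  qed
  also have "\<dots> = msum s (\<lambda>n. \<Sum>k\<le>n. a k * b (n - k)) B i j" by (simp add: msum_def)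
  finally show "mat_mul s (msum s a B) (msum s b B) i j = msum s (\<lambda>n. \<Sum>k\<le>n. a k * b (n - k)) B i j" .
qed auto

definition ee :: "real \<Rightarrow> nat \<Rightarrow> real" where
  "ee a k = (-1) ^ k * (a gchoose k)"

lemma ee_summable: assumes "0 \<le> r" "r < 1" shows "summable (\<lambda>k. \<bar>ee a k\<bar> * r ^ k)"
proof -
  have "ereal (norm r) < conv_radius ((gchoose) a)"
    using assms by (simp add: conv_radius_gchoose)
  from abs_summable_in_conv_radius[OF this]
  show ?thesis using assms by (simp add: ee_def abs_mult power_abs)
qed

lemma ee_conv: "(\<Sum>k\<le>n. ee a k * ee b (n - k)) = ee (a + b) n"
proof -
  have "(\<Sum>k\<le>n. ee a k * ee b (n - k)) = (\<Sum>k\<in>{0..n}. (-1) ^ n * ((a gchoose k) * (b gchoose (n - k))))"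
  proof (intro sum.cong)
    fix k assume "k \<in> {0..n}"
    then have "(-1::real) ^ k * (-1) ^ (n - k) = (-1) ^ n" by (simp add: power_add[symmetric])
    then show "ee a k * ee b (n - k) = (-1) ^ n * ((a gchoose k) * (b gchoose (n - k)))"
      unfolding ee_def by (metis (no_types, lifting) mult.assoc mult.left_commute)
  qed auto
  also have "\<dots> = ee (a + b) n" by (simp add: ee_def sum_distrib_left[symmetric] gbinomial_Vandermonde)
  finally show ?thesis .
qed

lemma ee_0: "ee 0 k = (if k = 0 then 1 else 0)"
  by (cases k) (auto simp: ee_def gbinomial_Suc)

lemma ee_1: "ee 1 k = (if k = 0 then 1 else if k = 1 then -1 else 0)"
proof -
  have "(1::real) gchoose k = of_nat (1 choose k)" by (metis binomial_gbinomial of_nat_1)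
  then show ?thesis by (cases k) (auto simp: ee_def binomial_eq_0)
qed


definition qf :: "nat \<Rightarrow> (nat \<Rightarrow> nat \<Rightarrow> real) \<Rightarrow> (nat \<Rightarrow> real) \<Rightarrow> real" where
  "qf s M x = (\<Sum>i<s. \<Sum>j<s. x i * M i j * x j)"

lemma qf_nonneg: assumes "pos_def s K" shows "0 \<le> qf s K x"
proof (cases "\<exists>i<s. x i \<noteq> 0")
  case True
  then have "0 < qf s K x" using assms unfolding pos_def_def qf_def by blast
  then show ?thesis by simp
next
  case False then show ?thesis by (auto simp: qf_def)
qed

lemma qf_zero: assumes "pos_def s K" "qf s K x = 0" "i < s" shows "x i = 0"
proof (rule ccontr)
  assume "x i \<noteq> 0"
  then have "0 < qf s K x" using assms(1,3) unfolding pos_def_def qf_def by blast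
  with assms(2) show False by simp
qed

lemma sqrt_unique:
  assumes K1: "is_mat s K1" "pos_def s K1" and K2: "is_mat s K2" "pos_def s K2"
    and eq: "mat_mul s K1 K1 = mat_mul s K2 K2"
  shows "K1 = K2"
proof -
  define D where "D i j = K1 i j - K2 i j" for i j
  have E: "(\<Sum>k<s. K1 i k * D k j) + (\<Sum>k<s. D i k * K2 k j) = 0" if ij: "i < s" "j < s" for i j
  proof -
    have "(\<Sum>k<s. K1 i k * D k j) + (\<Sum>k<s. D i k * K2 k j)
        = (\<Sum>k<s. K1 i k * K1 k j) - (\<Sum>k<s. K2 i k * K2 k j)"
      by (simp add: D_def right_diff_distrib left_diff_distrib sum_subtractf)
    also have "\<dots> = mat_mul s K1 K1 i j - mat_mul s K2 K2 i j" using ij by (simp add: mat_mul_def)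
    finally show ?thesis using eq by simp
  qed
  have "0 = (\<Sum>i<s. \<Sum>j<s. D i j * ((\<Sum>k<s. K1 i k * D k j) + (\<Sum>k<s. D i k * K2 k j)))"
    using E by simp
  also have "\<dots> = (\<Sum>i<s. \<Sum>j<s. \<Sum>k<s. D i j * K1 i k * D k j) + (\<Sum>i<s. \<Sum>j<s. \<Sum>k<s. D i k * K2 k j * D i j)"
    by (simp add: distrib_left sum.distrib sum_distrib_left mult.assoc mult.commute mult.left_commute)
  also have "(\<Sum>i<s. \<Sum>j<s. \<Sum>k<s. D i j * K1 i k * D k j) = (\<Sum>j<s. qf s K1 (\<lambda>i. D i j))"
    unfolding qf_def by (rule sum.swap[of "\<lambda>i j. \<Sum>k<s. D i j * K1 i k * D k j"])
  also have "(\<Sum>i<s. \<Sum>j<s. \<Sum>k<s. D i k * K2 k j * D i j) = (\<Sum>i<s. qf s K2 (\<lambda>k. D i k))"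
  proof (intro sum.cong refl)
    fix i
    show "(\<Sum>j<s. \<Sum>k<s. D i k * K2 k j * D i j) = qf s K2 (\<lambda>k. D i k)"
      unfolding qf_def by (rule sum.swap[of "\<lambda>j k. D i k * K2 k j * D i j"])
  qed
  finally have sum0: "(\<Sum>j<s. qf s K1 (\<lambda>i. D i j)) + (\<Sum>i<s. qf s K2 (\<lambda>k. D i k)) = 0" by simp
  have nn1: "0 \<le> (\<Sum>j<s. qf s K1 (\<lambda>i. D i j))" by (intro sum_nonneg qf_nonneg K1)
  have nn2: "0 \<le> (\<Sum>i<s. qf s K2 (\<lambda>k. D i k))" by (intro sum_nonneg qf_nonneg K2)
  have "(\<Sum>j<s. qf s K1 (\<lambda>i. D i j)) = 0" using sum0 nn1 nn2 by linarith
  then have z: "\<forall>j\<in>{..<s}. qf s K1 (\<lambda>i. D i j) = 0"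
    using sum_nonneg_eq_0_iff[of "{..<s}" "\<lambda>j. qf s K1 (\<lambda>i. D i j)"] qf_nonneg[OF K1(2)] by blast
  have "D i j = 0" if "i < s" "j < s" for i j
  proof -
    have "qf s K1 (\<lambda>i. D i j) = 0" using z that by blast
    from qf_zero[OF K1(2) this that(1)] show ?thesis by simp
  qed
  then show ?thesis using K1(1) K2(1) by (intro is_mat_eqI) (auto simp: D_def)
qed

lemma mat_sqrt_eq:
  assumes "is_mat s K" "mat_sym s K" "pos_def s K" "mat_mul s K K = M"
  shows "mat_sqrt s M = K"
  unfolding mat_sqrt_def
proof (rule the_equality)
  show "is_mat s K \<and> mat_sym s K \<and> pos_def s K \<and> mat_mul s K K = M" using assms by simp
  fix K' assume K': "is_mat s K' \<and> mat_sym s K' \<and> pos_def s K' \<and> mat_mul s K' K' = M"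
  have e: "mat_mul s K' K' = mat_mul s K K" using K' assms(4) by simp
  show "K' = K" by (rule sqrt_unique[OF _ _ assms(1,3) e]) (use K' in blast)+
qed

lemma mat_inv_eq:
  assumes "is_mat s K" "mat_mul s M K = id_mat s" "mat_mul s K M = id_mat s"
  shows "mat_inv s M = K"
  unfolding mat_inv_def
proof (rule the_equality)
  show "is_mat s K \<and> mat_mul s M K = id_mat s" using assms by simp
  fix K' assume K': "is_mat s K' \<and> mat_mul s M K' = id_mat s"
  have "K' = mat_mul s (id_mat s) K'" using K' by (simp add: mat_mul_id_left)
  also have "\<dots> = mat_mul s (mat_mul s K M) K'" using assms by simp
  also have "\<dots> = mat_mul s K (mat_mul s M K')" by (rule mat_mul_assoc)
  also have "\<dots> = mat_mul s K (id_mat s)" using K' by simp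
  also have "\<dots> = K" using assms(1) by (simp add: mat_mul_id_right)
  finally show "K' = K" .
qed

lemma sum3_swap: "(\<Sum>i\<in>A. \<Sum>j\<in>B. \<Sum>m\<in>C. f i j m) = (\<Sum>m\<in>C. \<Sum>i\<in>A. \<Sum>j\<in>B. f i j m)"
proof -
  have "(\<Sum>i\<in>A. \<Sum>j\<in>B. \<Sum>m\<in>C. f i j m) = (\<Sum>i\<in>A. \<Sum>m\<in>C. \<Sum>j\<in>B. f i j m)"
  proof (intro sum.cong refl)
    fix i show "(\<Sum>j\<in>B. \<Sum>m\<in>C. f i j m) = (\<Sum>m\<in>C. \<Sum>j\<in>B. f i j m)"
      by (rule sum.swap[of "f i" C B])
  qed
  also have "\<dots> = (\<Sum>m\<in>C. \<Sum>i\<in>A. \<Sum>j\<in>B. f i j m)" by (rule sum.swap[of "\<lambda>i m. \<Sum>j\<in>B. f i j m" C A])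
  finally show ?thesis .
qed

locale contr =
  fixes s :: nat and B :: "nat \<Rightarrow> nat \<Rightarrow> real" and r :: real
  assumes B_mat: "is_mat s B" and B_sym: "mat_sym s B" and rb: "rb s B r"
    and r0: "0 \<le> r" and r1: "r < 1"
begin

definition F :: "real \<Rightarrow> nat \<Rightarrow> nat \<Rightarrow> real" where
  "F a = msum s (ee a) B"

lemma F_mat[simp]: "is_mat s (F a)" by (simp add: F_def)

lemma F_sym: "mat_sym s (F a)" unfolding F_def by (intro msum_sym B_mat B_sym)

lemma F_mul: "mat_mul s (F a) (F b) = F (a + b)"
  unfolding F_def
  by (subst msum_mul[OF rb r0 ee_summable[OF r0 r1] ee_summable[OF r0 r1]]) (simp add: ee_conv)

lemma F_0: "F 0 = id_mat s"
proof (rule is_mat_eqI)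
  fix i j assume "i < s" "j < s"
  have "F 0 i j = (\<Sum>k. if k = 0 then mpow s B 0 i j else 0)"
    unfolding F_def msum_def by (intro suminf_cong) (simp add: ee_0)
  also have "\<dots> = mpow s B 0 i j" by (rule sums_unique[symmetric]) (rule sums_single)
  finally show "F 0 i j = id_mat s i j" by simp
qed auto

lemma F_1: "F 1 = mat_sub s (id_mat s) B"
proof (rule is_mat_eqI)
  fix i j assume ij: "i < s" "j < s"
  have "F 1 i j = (\<Sum>k\<in>{0,1}. ee 1 k * mpow s B k i j)"
    unfolding F_def msum_def by (rule suminf_finite) (auto simp: ee_1)
  also have "\<dots> = id_mat s i j - B i j" by (simp add: ee_1 mat_mul_id_right[OF B_mat])
  finally show "F 1 i j = mat_sub s (id_mat s) B i j" using ij by (simp add: mat_sub_def)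
qed auto

lemma F_comm: "mat_mul s (F a) (F b) = mat_mul s (F b) (F a)"
proof -
  have "mat_mul s (F a) (F b) = F (a + b)" by (rule F_mul)
  also have "\<dots> = F (b + a)" by (simp add: add.commute)
  also have "\<dots> = mat_mul s (F b) (F a)" by (rule F_mul[symmetric])
  finally show ?thesis .
qed

lemma F_pd: "pos_def s (F a)"
  unfolding pos_def_def
proof (intro allI impI)
  fix x :: "nat \<Rightarrow> real" assume "\<exists>i<s. x i \<noteq> 0"
  then obtain i0 where i0: "i0 < s" "x i0 \<noteq> 0" by auto
  let ?K = "F (a/2)" and ?K' = "F (-a/2)"
  define y where "y m = (\<Sum>j<s. ?K m j * x j)" for m
  have FKK: "F a = mat_mul s ?K ?K" by (simp add: F_mul)
  have "(\<Sum>i<s. \<Sum>j<s. x i * F a i j * x j) = (\<Sum>i<s. \<Sum>j<s. \<Sum>m<s. x i * ?K i m * ?K m j * x j)"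
    by (subst FKK) (simp add: mat_mul_def sum_distrib_left sum_distrib_right mult.assoc)
  also have "\<dots> = (\<Sum>m<s. \<Sum>i<s. \<Sum>j<s. x i * ?K i m * ?K m j * x j)"
    by (rule sum3_swap[of "\<lambda>i j m. x i * ?K i m * ?K m j * x j"])
  also have "\<dots> = (\<Sum>m<s. y m * y m)"
  proof (intro sum.cong refl)
    fix m assume "m \<in> {..<s}"
    then have "\<And>i. i < s \<Longrightarrow> ?K i m = ?K m i" using F_sym by (auto simp: mat_sym_def)
    then have "(\<Sum>i<s. \<Sum>j<s. x i * ?K i m * ?K m j * x j) = (\<Sum>i<s. \<Sum>j<s. (?K m i * x i) * (?K m j * x j))"
      by (intro sum.cong refl) (simp add: algebra_simps)
    also have "\<dots> = y m * y m" by (simp add: y_def sum_product)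
    finally show "(\<Sum>i<s. \<Sum>j<s. x i * ?K i m * ?K m j * x j) = y m * y m" .
  qed
  finally have eq: "(\<Sum>i<s. \<Sum>j<s. x i * F a i j * x j) = (\<Sum>m<s. y m * y m)" .
  have nn: "0 \<le> (\<Sum>m<s. y m * y m)" by (intro sum_nonneg) simp
  have "(\<Sum>m<s. y m * y m) \<noteq> 0"
  proof
    assume "(\<Sum>m<s. y m * y m) = 0"
    then have y0: "\<forall>m\<in>{..<s}. y m * y m = 0" by (subst (asm) sum_nonneg_eq_0_iff) auto
    have "x i0 = (\<Sum>j<s. id_mat s i0 j * x j)"
    proof -
      have "(\<Sum>j<s. id_mat s i0 j * x j) = (\<Sum>j<s. if j = i0 then x j else 0)"
        using i0 by (intro sum.cong) (auto simp: id_mat_def)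
      then show ?thesis using i0 by simp
    qed
    also have "\<dots> = (\<Sum>j<s. mat_mul s ?K' ?K i0 j * x j)"
    proof -
      have "mat_mul s ?K' ?K = F (-a/2 + a/2)" by (rule F_mul)
      also have "\<dots> = id_mat s" using F_0 by simp
      finally show ?thesis by simp
    qed
    also have "\<dots> = (\<Sum>j<s. \<Sum>m<s. ?K' i0 m * ?K m j * x j)"
      using i0 by (simp add: mat_mul_def sum_distrib_right)
    also have "\<dots> = (\<Sum>m<s. \<Sum>j<s. ?K' i0 m * ?K m j * x j)" by (rule sum.swap[of "\<lambda>j m. ?K' i0 m * ?K m j * x j"])
    also have "\<dots> = (\<Sum>m<s. ?K' i0 m * y m)"
      by (simp add: y_def sum_distrib_left mult.assoc)
    also have "\<dots> = 0" using y0 by simp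
    finally show False using i0 by simp
  qed
  then show "0 < (\<Sum>i<s. \<Sum>j<s. x i * F a i j * x j)" using eq nn by simp
qed

end


lemma cyc_nonneg: "0 \<le> cyc_shift s i j"
  by (simp add: cyc_shift_def)

lemma cyc_row: "i < s \<Longrightarrow> (\<Sum>j<s. cyc_shift s i j) = 1"
proof -
  assume i: "i < s"
  then have "(\<Sum>j<s. cyc_shift s i j) = (\<Sum>j<s. if j = Suc i mod s then 1 else 0)"
    by (intro sum.cong) (auto simp: cyc_shift_def)
  also have "\<dots> = 1" using i by simp
  finally show ?thesis .
qed

lemma cyc_col: "i < s \<Longrightarrow> (\<Sum>j<s. cyc_shift s j i) = 1"
proof -
  assume i: "i < s"
  define j0 where "j0 = (if i = 0 then s - 1 else i - 1)"
  have j0: "j0 < s" using i by (auto simp: j0_def)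
  have iff: "j < s \<Longrightarrow> (i = Suc j mod s) \<longleftrightarrow> j = j0" for j
  proof -
    assume j: "j < s"
    have m: "Suc j mod s = (if Suc j = s then 0 else Suc j)"
      using j by (cases "Suc j = s") auto
    show ?thesis using i j unfolding m j0_def by auto
  qed
  have "(\<Sum>j<s. cyc_shift s j i) = (\<Sum>j<s. if j = j0 then 1 else 0)"
    using i iff by (intro sum.cong) (auto simp: cyc_shift_def)
  also have "\<dots> = 1" using j0 by simp
  finally show ?thesis .
qed

lemma A_entry:
  "i < s \<Longrightarrow> j < s \<Longrightarrow> coupling_mat s \<beta> \<alpha> i j
     = (if i = j then \<beta> else 0) + \<alpha> * (cyc_shift s i j + cyc_shift s j i)"
  by (simp add: coupling_mat_def mat_add_def mat_smult_def id_mat_def mat_transp_def)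

lemma A_mat: "is_mat s (coupling_mat s \<beta> \<alpha>)"
  by (simp add: coupling_mat_def)

lemma A_sym: "mat_sym s (coupling_mat s \<beta> \<alpha>)"
  by (simp add: mat_sym_def A_entry)

lemma rb_generic:
  assumes "0 \<le> d" "\<And>i j. i < s \<Longrightarrow> j < s \<Longrightarrow> M i j = (if i = j then c else 0) - d * (cyc_shift s i j + cyc_shift s j i)"
  shows "rb s M (\<bar>c\<bar> + 2 * d)"
  unfolding rb_def
proof (intro allI impI)
  fix i assume i: "i < s"
  have "(\<Sum>j<s. \<bar>M i j\<bar>) \<le> (\<Sum>j<s. (if j = i then \<bar>c\<bar> else 0) + d * cyc_shift s i j + d * cyc_shift s j i)"
  proof (intro sum_mono)
    fix j assume "j \<in> {..<s}"
    then have "M i j = (if i = j then c else 0) - d * (cyc_shift s i j + cyc_shift s j i)"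
      using assms(2) i by simp
    moreover have "0 \<le> d * cyc_shift s i j" "0 \<le> d * cyc_shift s j i"
      using assms(1) cyc_nonneg by auto
    ultimately show "\<bar>M i j\<bar> \<le> (if j = i then \<bar>c\<bar> else 0) + d * cyc_shift s i j + d * cyc_shift s j i"
      by (auto simp: distrib_left)
  qed
  also have "\<dots> = \<bar>c\<bar> + d * (\<Sum>j<s. cyc_shift s i j) + d * (\<Sum>j<s. cyc_shift s j i)"
    using i by (simp add: sum.distrib sum_distrib_left)
  also have "\<dots> = \<bar>c\<bar> + 2 * d" using i by (simp add: cyc_row cyc_col)
  finally show "(\<Sum>j<s. \<bar>M i j\<bar>) \<le> \<bar>c\<bar> + 2 * d" .
qed

lemma smult_mul: "mat_mul s (mat_smult s c M) (mat_smult s d K) = mat_smult s (c * d) (mat_mul s M K)"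
proof (rule is_mat_eqI)
  fix i j assume "i < s" "j < s"
  then show "mat_mul s (mat_smult s c M) (mat_smult s d K) i j = mat_smult s (c * d) (mat_mul s M K) i j"
    by (simp add: mat_mul_def mat_smult_def sum_distrib_left mult.assoc mult.left_commute)
qed auto

lemma smult_sym: "mat_sym s M \<Longrightarrow> mat_sym s (mat_smult s c M)"
  by (simp add: mat_sym_def mat_smult_def)

lemma smult_pd: assumes "0 < c" "pos_def s M" shows "pos_def s (mat_smult s c M)"
  unfolding pos_def_def
proof (intro allI impI)
  fix x :: "nat \<Rightarrow> real" assume x: "\<exists>i<s. x i \<noteq> 0"
  have "(\<Sum>i<s. \<Sum>j<s. x i * mat_smult s c M i j * x j) = c * (\<Sum>i<s. \<Sum>j<s. x i * M i j * x j)"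
    by (simp add: mat_smult_def sum_distrib_left mult.assoc mult.left_commute)
  moreover have "0 < (\<Sum>i<s. \<Sum>j<s. x i * M i j * x j)" using assms(2) x by (auto simp: pos_def_def)
  ultimately show "0 < (\<Sum>i<s. \<Sum>j<s. x i * mat_smult s c M i j * x j)" using assms(1) by simp
qed

lemma mul_sym: assumes "mat_sym s M" shows "mat_sym s (mat_mul s M M)"
  unfolding mat_sym_def
proof (intro allI impI)
  fix i j assume ij: "i < s" "j < s"
  have "mat_mul s M M i j = (\<Sum>k<s. M i k * M k j)" using ij by (simp add: mat_mul_def)
  also have "\<dots> = (\<Sum>k<s. M j k * M k i)"
    using assms ij by (intro sum.cong) (auto simp: mat_sym_def mult.commute)
  also have "\<dots> = mat_mul s M M j i" using ij by (simp add: mat_mul_def)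
  finally show "mat_mul s M M i j = mat_mul s M M j i" .
qed

lemma delta_sum1: fixes s :: nat shows "i < s \<Longrightarrow> (\<Sum>k<s. (if i = k then 1 else 0) * f k) = (f i :: real)"
proof -
  assume i: "i < s"
  have "(\<Sum>k<s. (if i = k then 1 else 0) * f k) = (\<Sum>k<s. if k = i then f k else 0)"
    by (intro sum.cong) auto
  also have "\<dots> = f i" using i by (subst sum.delta) auto
  finally show ?thesis .
qed

lemma delta_sum2: fixes s :: nat shows "j < s \<Longrightarrow> (\<Sum>k<s. f k * (if k = j then 1 else 0)) = (f j :: real)"
proof -
  assume j: "j < s"
  have "(\<Sum>k<s. f k * (if k = j then 1 else 0)) = (\<Sum>k<s. if k = j then f k else 0)"
    by (intro sum.cong) auto
  also have "\<dots> = f j" using j by (subst sum.delta) auto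
  finally show ?thesis .
qed

lemma smult_one: "is_mat s M \<Longrightarrow> mat_smult s 1 M = M"
  by (intro ext) (auto simp: mat_smult_def is_mat_def)

locale model =
  fixes s :: nat and \<alpha> \<beta> :: real
  assumes s0: "0 < s" and ab: "\<beta> > 2 * \<alpha>" and a0: "\<alpha> > 0" and ab1: "\<beta> + 2 * \<alpha> < 1"
begin

definition "A = coupling_mat s \<beta> \<alpha>"
definition "B1 = mat_sub s (id_mat s) A"
definition "D2 = mat_sub s (id_mat s) (mat_smult s 2 A)"
definition "B2 = mat_mul s D2 D2"
definition "r1 = 1 - \<beta> + 2 * \<alpha>"
definition "r2 = (\<bar>1 - 2 * \<beta>\<bar> + 4 * \<alpha>)^2"

lemma A_is[simp]: "is_mat s A" unfolding A_def by (rule A_mat)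
lemma A_sy: "mat_sym s A" unfolding A_def by (rule A_sym)

lemma B1_rb: "rb s B1 r1"
proof -
  have "rb s B1 (\<bar>1 - \<beta>\<bar> + 2 * \<alpha>)"
  proof (rule rb_generic)
    show "0 \<le> \<alpha>" using a0 by simp
    fix i j :: nat assume "i < s" "j < s"
    then show "B1 i j = (if i = j then 1 - \<beta> else 0) - \<alpha> * (cyc_shift s i j + cyc_shift s j i)"
      by (cases "i = j") (simp_all add: B1_def mat_sub_def id_mat_def A_def A_entry)
  qed
  moreover have "\<bar>1 - \<beta>\<bar> = 1 - \<beta>" using ab a0 ab1 by simp
  ultimately show ?thesis by (simp add: r1_def)
qed

lemma D2_rb: "rb s D2 (\<bar>1 - 2 * \<beta>\<bar> + 4 * \<alpha>)"
proof -
  have "rb s D2 (\<bar>1 - 2 * \<beta>\<bar> + 2 * (2 * \<alpha>))"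
  proof (rule rb_generic)
    show "0 \<le> 2 * \<alpha>" using a0 by simp
    fix i j :: nat assume "i < s" "j < s"
    then show "D2 i j = (if i = j then 1 - 2 * \<beta> else 0) - 2 * \<alpha> * (cyc_shift s i j + cyc_shift s j i)"
      by (cases "i = j") (simp_all add: D2_def mat_sub_def mat_smult_def id_mat_def A_def A_entry algebra_simps)
  qed
  then show ?thesis by simp
qed

lemma B2_rb: "rb s B2 r2"
  unfolding B2_def r2_def power2_eq_square
  by (rule rb_mul[OF D2_rb D2_rb]) (use a0 abs_ge_zero[of "1 - 2 * \<beta>"] in linarith)

lemma D2_sym: "mat_sym s D2"
  using A_sy by (simp add: mat_sym_def D2_def mat_sub_def mat_smult_def id_mat_def)

lemma B1_sym: "mat_sym s B1"
  using A_sy by (simp add: mat_sym_def B1_def mat_sub_def id_mat_def)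

lemma contr1: "contr s B1 r1"
proof unfold_locales
  show "is_mat s B1" by (simp add: B1_def)
  show "mat_sym s B1" by (rule B1_sym)
  show "rb s B1 r1" by (rule B1_rb)
  show "0 \<le> r1" using ab a0 ab1 by (simp add: r1_def)
  show "r1 < 1" using ab a0 ab1 by (simp add: r1_def)
qed

lemma contr2: "contr s B2 r2"
proof unfold_locales
  show "is_mat s B2" by (simp add: B2_def)
  show "mat_sym s B2" unfolding B2_def by (rule mul_sym[OF D2_sym])
  show "rb s B2 r2" by (rule B2_rb)
  show "0 \<le> r2" by (simp add: r2_def)
  define q where "q = \<bar>1 - 2 * \<beta>\<bar> + 4 * \<alpha>"
  have q1: "q < 1" using ab a0 ab1 unfolding q_def by (cases "1 - 2 * \<beta> \<ge> 0") auto
  have q0: "0 \<le> q" using a0 abs_ge_zero[of "1 - 2 * \<beta>"] unfolding q_def by linarith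
  have "q * q \<le> q * 1" using q0 q1 by (intro mult_left_mono) auto
  then show "r2 < 1" unfolding r2_def q_def[symmetric] power2_eq_square using q1 by linarith
qed

sublocale c1: contr s B1 r1 by (rule contr1)
sublocale c2: contr s B2 r2 by (rule contr2)

definition "S = mat_smult s (1/2) (c2.F (1/2))"
definition "R = mat_smult s 2 (c2.F (-1/2))"
definition "W = c1.F (-1)"
definition "Q = c1.F (-1/2)"

lemma A_F1: "c1.F 1 = A"
  unfolding c1.F_1
proof (rule is_mat_eqI)
  show "is_mat s (mat_sub s (id_mat s) B1)" by simp
  show "is_mat s A" by simp
  fix i j assume "i < s" "j < s"
  then show "mat_sub s (id_mat s) B1 i j = A i j" by (simp add: B1_def mat_sub_def)
qed

lemma AW: "mat_mul s A W = id_mat s"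
  unfolding W_def A_F1[symmetric] c1.F_mul by (simp add: c1.F_0)

lemma WA: "mat_mul s W A = id_mat s"
  unfolding W_def A_F1[symmetric] c1.F_mul by (simp add: c1.F_0)

lemma QQ: "mat_mul s Q Q = W"
  unfolding W_def Q_def c1.F_mul by simp

lemma SR: "mat_mul s S R = id_mat s"
  unfolding S_def R_def smult_mul c2.F_mul by (simp add: c2.F_0 smult_one)

lemma RS: "mat_mul s R S = id_mat s"
  unfolding S_def R_def smult_mul c2.F_mul by (simp add: c2.F_0 smult_one)

lemma SS: "mat_mul s S S = mat_sub s A (mat_mul s A A)"
proof (rule is_mat_eqI)
  fix i j assume ij: "i < s" "j < s"
  have D: "D2 i k = (if i = k then 1 else 0) - 2 * A i k" if "i < s" "k < s" for i k
    using that by (cases "i < s") (auto simp: D2_def mat_sub_def mat_smult_def id_mat_def)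
  have "mat_mul s S S i j = 1/4 * (id_mat s i j - B2 i j)"
    unfolding S_def smult_mul c2.F_mul using ij by (simp add: c2.F_1 mat_smult_def mat_sub_def)
  also have "B2 i j = (\<Sum>k<s. ((if i = k then 1 else 0) - 2 * A i k) * ((if k = j then 1 else 0) - 2 * A k j))"
    using ij D by (simp add: B2_def mat_mul_def)
  also have "\<dots> = (\<Sum>k<s. (if i = k then 1 else 0) * (if k = j then 1 else 0)
      - 2 * ((if i = k then 1 else 0) * A k j) - 2 * (A i k * (if k = j then 1 else 0))
      + 4 * (A i k * A k j))"
    by (intro sum.cong refl) (simp add: algebra_simps)
  also have "\<dots> = (\<Sum>k<s. (if i = k then 1 else 0) * (if k = j then 1 else 0))
      - 2 * (\<Sum>k<s. (if i = k then 1 else 0) * A k j) - 2 * (\<Sum>k<s. A i k * (if k = j then 1 else 0))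
      + 4 * (\<Sum>k<s. A i k * A k j)"
    by (simp only: sum.distrib sum_subtractf sum_distrib_left)
  also have "\<dots> = (if i = j then 1 else 0) - 2 * A i j - 2 * A i j + 4 * (\<Sum>k<s. A i k * A k j)"
    using ij by (simp add: delta_sum1 delta_sum2)
  finally have "mat_mul s S S i j = A i j - (\<Sum>k<s. A i k * A k j)"
    using ij by (simp add: id_mat_def algebra_simps)
  then show "mat_mul s S S i j = mat_sub s A (mat_mul s A A) i j"
    using ij by (simp add: mat_sub_def mat_mul_def)
qed auto

lemma S_sym: "mat_sym s S" unfolding S_def by (intro smult_sym c2.F_sym)
lemma R_sym: "mat_sym s R" unfolding R_def by (intro smult_sym c2.F_sym)
lemma W_sym: "mat_sym s W" unfolding W_def by (rule c1.F_sym)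
lemma Q_sym: "mat_sym s Q" unfolding Q_def by (rule c1.F_sym)
lemma S_pd: "pos_def s S" unfolding S_def by (intro smult_pd c2.F_pd) simp
lemma Q_pd: "pos_def s Q" unfolding Q_def by (rule c1.F_pd)
lemma S_is[simp]: "is_mat s S" by (simp add: S_def)
lemma R_is[simp]: "is_mat s R" by (simp add: R_def)
lemma W_is[simp]: "is_mat s W" by (simp add: W_def)
lemma Q_is[simp]: "is_mat s Q" by (simp add: Q_def)

lemma sqrt_S: "mat_sqrt s (mat_sub s A (mat_mul s A A)) = S"
  by (rule mat_sqrt_eq[OF S_is S_sym S_pd SS])

lemma inv_S: "mat_inv s S = R"
  by (rule mat_inv_eq[OF R_is SR RS])

lemma inv_A: "mat_inv s A = W"
  by (rule mat_inv_eq[OF W_is AW WA])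

lemma sqrt_W: "mat_sqrt s W = Q"
  by (rule mat_sqrt_eq[OF Q_is Q_sym Q_pd QQ])

end


lemma lborel_psf: "product_sigma_finite (\<lambda>_::nat. lborel :: real measure)"
  by (simp add: product_sigma_finite_def lborel.sigma_finite_measure_axioms)

lemma stdn_psf: "product_sigma_finite (\<lambda>_::nat. std_normal_distribution)"
  unfolding product_sigma_finite_def
  using prob_space_normal_density[of 1 0] by (simp add: prob_space_imp_sigma_finite)

lemma shift_meas: "(\<lambda>x. \<lambda>i\<in>{..<s}. x i + u i) \<in> measurable (lebesgue_vec s) (lebesgue_vec s)"
  unfolding lebesgue_vec_def by (intro measurable_restrict) measurable

lemma lborel_shift_emeasure:
  assumes A: "A \<in> sets borel"
  shows "emeasure lborel ((\<lambda>x::real. x + c) -` A) = emeasure lborel A"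
proof -
  have "emeasure lborel A = emeasure (distr lborel borel ((+) c)) A" by (simp add: lborel_distr_plus)
  also have "\<dots> = emeasure lborel (((+) c) -` A \<inter> space lborel)"
    using A by (intro emeasure_distr) auto
  also have "((+) c) -` A \<inter> space lborel = (\<lambda>x::real. x + c) -` A" by (auto simp: add.commute)
  finally show ?thesis by simp
qed

lemma lv_distr_shift:
  "distr (lebesgue_vec s) (lebesgue_vec s) (\<lambda>x. \<lambda>i\<in>{..<s}. x i + u i) = lebesgue_vec s"
proof -
  interpret lv: product_sigma_finite "\<lambda>_::nat. lborel :: real measure" by (rule lborel_psf)
  let ?T = "\<lambda>x. \<lambda>i\<in>{..<s}. x i + u i"
  show ?thesis unfolding lebesgue_vec_def
  proof (rule lv.PiM_eqI)
    show "finite {..<s}" by simp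
    show "sets (distr (Pi\<^sub>M {..<s} (\<lambda>_. lborel)) (Pi\<^sub>M {..<s} (\<lambda>_. lborel)) ?T) = sets (Pi\<^sub>M {..<s} (\<lambda>_. lborel))"
      by simp
    fix A :: "nat \<Rightarrow> real set" assume A: "\<And>i. i \<in> {..<s} \<Longrightarrow> A i \<in> sets lborel"
    have Tm: "?T \<in> measurable (Pi\<^sub>M {..<s} (\<lambda>_. lborel)) (Pi\<^sub>M {..<s} (\<lambda>_. lborel))"
      using shift_meas[where s=s and u=u] by (simp add: lebesgue_vec_def)
    have PA: "Pi\<^sub>E {..<s} A \<in> sets (Pi\<^sub>M {..<s} (\<lambda>_. lborel))"
      using A by (intro sets_PiM_I_finite) auto
    have pre: "?T -` Pi\<^sub>E {..<s} A \<inter> space (Pi\<^sub>M {..<s} (\<lambda>_. lborel))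
        = Pi\<^sub>E {..<s} (\<lambda>i. (\<lambda>x. x + u i) -` A i)"
      by (auto simp: space_PiM PiE_def Pi_def extensional_def)
    have Ai: "(\<lambda>x. x + u i) -` A i \<in> sets lborel" if "i \<in> {..<s}" for i
    proof -
      have "(\<lambda>x::real. x + u i) \<in> borel_measurable borel" by measurable
      from measurable_sets[OF this, of "A i"] A[OF that] show ?thesis by simp
    qed
    have "emeasure (distr (Pi\<^sub>M {..<s} (\<lambda>_. lborel)) (Pi\<^sub>M {..<s} (\<lambda>_. lborel)) ?T) (Pi\<^sub>E {..<s} A)
        = emeasure (Pi\<^sub>M {..<s} (\<lambda>_. lborel)) (Pi\<^sub>E {..<s} (\<lambda>i. (\<lambda>x. x + u i) -` A i))"
      using Tm PA by (simp add: emeasure_distr pre)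
    also have "\<dots> = (\<Prod>i<s. emeasure lborel ((\<lambda>x. x + u i) -` A i))"
      using Ai by (subst lv.emeasure_PiM) auto
    also have "\<dots> = (\<Prod>i<s. emeasure lborel (A i))"
      using A by (intro prod.cong refl lborel_shift_emeasure) auto
    finally show "emeasure (distr (Pi\<^sub>M {..<s} (\<lambda>_. lborel)) (Pi\<^sub>M {..<s} (\<lambda>_. lborel)) ?T) (Pi\<^sub>E {..<s} A)
        = (\<Prod>i\<in>{..<s}. emeasure lborel (A i))" by simp
  qed
qed

lemma lv_shift:
  fixes g :: "(nat \<Rightarrow> real) \<Rightarrow> real"
  assumes g: "g \<in> borel_measurable (lebesgue_vec s)"
  shows "integrable (lebesgue_vec s) (\<lambda>x. g (\<lambda>i\<in>{..<s}. x i + u i)) \<longleftrightarrow> integrable (lebesgue_vec s) g"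
    and "integral\<^sup>L (lebesgue_vec s) (\<lambda>x. g (\<lambda>i\<in>{..<s}. x i + u i)) = integral\<^sup>L (lebesgue_vec s) g"
proof -
  have "integrable (distr (lebesgue_vec s) (lebesgue_vec s) (\<lambda>x. \<lambda>i\<in>{..<s}. x i + u i)) g
      \<longleftrightarrow> integrable (lebesgue_vec s) (\<lambda>x. g (\<lambda>i\<in>{..<s}. x i + u i))"
    by (rule integrable_distr_eq[OF shift_meas g])
  then show "integrable (lebesgue_vec s) (\<lambda>x. g (\<lambda>i\<in>{..<s}. x i + u i)) \<longleftrightarrow> integrable (lebesgue_vec s) g"
    by (simp add: lv_distr_shift)
  have "integral\<^sup>L (distr (lebesgue_vec s) (lebesgue_vec s) (\<lambda>x. \<lambda>i\<in>{..<s}. x i + u i)) g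
      = integral\<^sup>L (lebesgue_vec s) (\<lambda>x. g (\<lambda>i\<in>{..<s}. x i + u i))"
    by (rule integral_distr[OF shift_meas g])
  then show "integral\<^sup>L (lebesgue_vec s) (\<lambda>x. g (\<lambda>i\<in>{..<s}. x i + u i)) = integral\<^sup>L (lebesgue_vec s) g"
    by (simp add: lv_distr_shift)
qed

lemma gauss1_integrable: "integrable lborel (\<lambda>y::real. exp (- (y\<^sup>2) / 2))"
proof -
  have "integrable lborel (\<lambda>y. sqrt (2 * pi) * std_normal_density y)"
    by (intro integrable_mult_right integrable_normal_density) auto
  moreover have "sqrt (2 * pi) * std_normal_density y = exp (- (y\<^sup>2) / 2)" for y :: real
  proof -
    have "sqrt (2 * pi) > 0" by simp
    then show ?thesis unfolding std_normal_density_def by (simp add: field_simps)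
  qed
  ultimately show ?thesis by simp
qed

lemma lv_gauss_integrable: "integrable (lebesgue_vec s) (\<lambda>x. exp (- (\<Sum>i<s. (x i)\<^sup>2) / 2))"
proof -
  interpret lv: product_sigma_finite "\<lambda>_::nat. lborel :: real measure" by (rule lborel_psf)
  have "integrable (Pi\<^sub>M {..<s} (\<lambda>_. lborel)) (\<lambda>x::nat\<Rightarrow>real. \<Prod>i<s. exp (- ((x i)\<^sup>2) / 2))"
    by (intro lv.product_integrable_prod gauss1_integrable) auto
  moreover have "(\<Prod>i<s. exp (- ((x i)\<^sup>2) / 2)) = exp (- (\<Sum>i<s. (x i)\<^sup>2) / 2)" for x :: "nat \<Rightarrow> real"
    by (simp add: exp_sum[symmetric] sum_negf sum_divide_distrib)
  ultimately show ?thesis by (simp add: lebesgue_vec_def)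
qed

lemma lv_space_pos: "emeasure (lebesgue_vec s) (space (lebesgue_vec s)) \<noteq> 0"
proof -
  interpret lv: product_sigma_finite "\<lambda>_::nat. lborel :: real measure" by (rule lborel_psf)
  have "emeasure (lebesgue_vec s) (Pi\<^sub>E {..<s} (\<lambda>_. {0..1})) = (\<Prod>i<s. emeasure lborel {0..1::real})"
    unfolding lebesgue_vec_def by (subst lv.emeasure_PiM) auto
  also have "\<dots> = 1" by simp
  finally have e: "emeasure (lebesgue_vec s) (Pi\<^sub>E {..<s} (\<lambda>_. {0..1})) = 1" .
  have "Pi\<^sub>E {..<s} (\<lambda>_. {0..1::real}) \<subseteq> space (lebesgue_vec s)"
    by (auto simp: lebesgue_vec_def space_PiM)
  then have "emeasure (lebesgue_vec s) (Pi\<^sub>E {..<s} (\<lambda>_. {0..1})) \<le> emeasure (lebesgue_vec s) (space (lebesgue_vec s))"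
    by (intro emeasure_mono) auto
  with e show ?thesis by auto
qed

lemma lv_integral_pos:
  fixes f :: "(nat \<Rightarrow> real) \<Rightarrow> real"
  assumes f: "integrable (lebesgue_vec s) f" and pos: "\<And>x. 0 < f x"
  shows "0 < integral\<^sup>L (lebesgue_vec s) f"
proof -
  have nn: "0 \<le> integral\<^sup>L (lebesgue_vec s) f" by (rule integral_nonneg_AE) (simp add: pos less_imp_le)
  have "integral\<^sup>L (lebesgue_vec s) f \<noteq> 0"
  proof
    assume "integral\<^sup>L (lebesgue_vec s) f = 0"
    then have "AE x in lebesgue_vec s. f x = 0"
      using integral_nonneg_eq_0_iff_AE[OF f] pos by (auto intro: less_imp_le)
    then have "AE x in lebesgue_vec s. False"
    proof eventually_elim
      case (elim x) then show False using pos[of x] by simp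
    qed
    then show False using lv_space_pos[of s] by (simp add: eventually_False ae_filter_eq_bot_iff)
  qed
  with nn show ?thesis by simp
qed


definition mv :: "nat \<Rightarrow> (nat \<Rightarrow> nat \<Rightarrow> real) \<Rightarrow> (nat \<Rightarrow> real) \<Rightarrow> nat \<Rightarrow> real" where
  "mv s M x = (\<lambda>i. \<Sum>j<s. M i j * x j)"

definition dot :: "nat \<Rightarrow> (nat \<Rightarrow> real) \<Rightarrow> (nat \<Rightarrow> real) \<Rightarrow> real" where
  "dot s x y = (\<Sum>i<s. x i * y i)"

lemma dot_comm: "dot s x y = dot s y x"
  by (simp add: dot_def mult.commute)

lemma mv_mul: "i < s \<Longrightarrow> mv s (mat_mul s M K) x i = mv s M (mv s K x) i"
proof -
  assume i: "i < s"
  have "mv s (mat_mul s M K) x i = (\<Sum>j<s. \<Sum>k<s. M i k * K k j * x j)"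
    using i by (simp add: mv_def mat_mul_def sum_distrib_right)
  also have "\<dots> = (\<Sum>k<s. \<Sum>j<s. M i k * K k j * x j)"
    by (rule sum.swap[of "\<lambda>j k. M i k * K k j * x j"])
  also have "\<dots> = mv s M (mv s K x) i"
    by (simp add: mv_def sum_distrib_left mult.assoc)
  finally show ?thesis .
qed

lemma dot_mv_sym: assumes "mat_sym s M" shows "dot s x (mv s M y) = dot s (mv s M x) y"
proof -
  have "dot s x (mv s M y) = (\<Sum>i<s. \<Sum>j<s. x i * M i j * y j)"
    by (simp add: dot_def mv_def sum_distrib_left mult.assoc)
  also have "\<dots> = (\<Sum>j<s. \<Sum>i<s. x i * M i j * y j)"
    by (rule sum.swap[of "\<lambda>i j. x i * M i j * y j"])
  also have "\<dots> = (\<Sum>j<s. \<Sum>i<s. M j i * x i * y j)"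
    using assms by (intro sum.cong refl) (auto simp: mat_sym_def mult.commute)
  also have "\<dots> = dot s (mv s M x) y"
    by (simp add: dot_def mv_def sum_distrib_right)
  finally show ?thesis .
qed

lemma mv_id: "i < s \<Longrightarrow> mv s (id_mat s) x i = x i"
  unfolding mv_def id_mat_def by (simp add: delta_sum1)

lemma mv_inv: "mat_mul s M K = id_mat s \<Longrightarrow> i < s \<Longrightarrow> mv s M (mv s K x) i = x i"
  by (metis mv_id mv_mul)

lemma dot_cong: "(\<And>i. i < s \<Longrightarrow> x i = x' i) \<Longrightarrow> (\<And>i. i < s \<Longrightarrow> y i = y' i) \<Longrightarrow> dot s x y = dot s x' y'"
  unfolding dot_def by (intro sum.cong) auto

lemma mv_cong: "(\<And>j. j < s \<Longrightarrow> x j = x' j) \<Longrightarrow> mv s M x = mv s M x'"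
  unfolding mv_def by (intro ext sum.cong) auto

lemma mv_diff: "mv s M (\<lambda>i. x i - u i) i = mv s M x i - mv s M u i"
  by (simp add: mv_def right_diff_distrib sum_subtractf)

lemma mv_add: "mv s M (\<lambda>i. x i + u i) i = mv s M x i + mv s M u i"
  by (simp add: mv_def distrib_left sum.distrib)

lemma dot_diff_left: "dot s (\<lambda>i. x i - u i) y = dot s x y - dot s u y"
  by (simp add: dot_def left_diff_distrib sum_subtractf)

lemma dot_add_left: "dot s (\<lambda>i. x i + u i) y = dot s x y + dot s u y"
  by (simp add: dot_def distrib_right sum.distrib)

lemma dot_add_right: "dot s y (\<lambda>i. x i + u i) = dot s y x + dot s y u"
  by (simp add: dot_def distrib_left sum.distrib)

lemma dot_diff_right: "dot s y (\<lambda>i. x i - u i) = dot s y x - dot s y u"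
  by (simp add: dot_def right_diff_distrib sum_subtractf)

lemma dot_meas[measurable]: "(\<lambda>x. dot s x (mv s P x)) \<in> borel_measurable (lebesgue_vec s)"
  unfolding dot_def mv_def lebesgue_vec_def by measurable

lemma lin_meas[measurable]: "(\<lambda>x. dot s b x) \<in> borel_measurable (lebesgue_vec s)"
  unfolding dot_def lebesgue_vec_def by measurable

lemma quad_shift:
  assumes sym: "mat_sym s P"
  shows "- (1/2) * dot s x (mv s P x) + dot s (mv s P u) x
    = - (1/2) * dot s (\<lambda>i. x i - u i) (mv s P (\<lambda>i. x i - u i)) + (1/2) * dot s u (mv s P u)"
proof -
  have e1: "mv s P (\<lambda>i. x i - u i) = (\<lambda>i. mv s P x i - mv s P u i)"
    by (intro ext) (rule mv_diff)
  have "dot s (\<lambda>i. x i - u i) (mv s P (\<lambda>i. x i - u i))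
      = dot s x (mv s P x) - dot s x (mv s P u) - dot s u (mv s P x) + dot s u (mv s P u)"
    unfolding e1 dot_diff_left dot_diff_right by simp
  moreover have "dot s x (mv s P u) = dot s (mv s P u) x" by (rule dot_comm)
  moreover have "dot s u (mv s P x) = dot s (mv s P u) x" by (rule dot_mv_sym[OF sym])
  ultimately show ?thesis by (simp add: algebra_simps)
qed

lemma gq:
  assumes sym: "mat_sym s P" and ge: "\<And>x. dot s x x \<le> dot s x (mv s P x)"
  shows "integrable (lebesgue_vec s) (\<lambda>x. exp (- (1/2) * dot s x (mv s P x)))"
    and "0 < integral\<^sup>L (lebesgue_vec s) (\<lambda>x. exp (- (1/2) * dot s x (mv s P x)))"
    and "integrable (lebesgue_vec s) (\<lambda>x. exp (- (1/2) * dot s x (mv s P x) + dot s (mv s P u) x))"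
    and "integral\<^sup>L (lebesgue_vec s) (\<lambda>x. exp (- (1/2) * dot s x (mv s P x) + dot s (mv s P u) x))
       = exp ((1/2) * dot s u (mv s P u)) * integral\<^sup>L (lebesgue_vec s) (\<lambda>x. exp (- (1/2) * dot s x (mv s P x)))"
proof -
  define g where "g = (\<lambda>x. exp (- (1/2) * dot s x (mv s P x)))"
  have gm: "g \<in> borel_measurable (lebesgue_vec s)" unfolding g_def by measurable
  have gi: "integrable (lebesgue_vec s) g"
  proof (rule Bochner_Integration.integrable_bound[OF lv_gauss_integrable gm])
    show "AE x in lebesgue_vec s. norm (g x) \<le> norm (exp (- (\<Sum>i<s. (x i)\<^sup>2) / 2))"
    proof (intro AE_I2)
      fix x :: "nat \<Rightarrow> real"
      have "dot s x x = (\<Sum>i<s. (x i)\<^sup>2)" by (simp add: dot_def power2_eq_square)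
      then have "- (1/2) * dot s x (mv s P x) \<le> - (\<Sum>i<s. (x i)\<^sup>2) / 2" using ge[of x] by simp
      then show "norm (g x) \<le> norm (exp (- (\<Sum>i<s. (x i)\<^sup>2) / 2))" by (simp add: g_def)
    qed
  qed
  then show "integrable (lebesgue_vec s) (\<lambda>x. exp (- (1/2) * dot s x (mv s P x)))" by (simp add: g_def)
  show "0 < integral\<^sup>L (lebesgue_vec s) (\<lambda>x. exp (- (1/2) * dot s x (mv s P x)))"
    using lv_integral_pos[OF gi] by (simp add: g_def)
  have sh: "g (\<lambda>i\<in>{..<s}. x i + - u i) = exp (- (1/2) * dot s (\<lambda>i. x i - u i) (mv s P (\<lambda>i. x i - u i)))" for x
  proof -
    have "mv s P (\<lambda>i\<in>{..<s}. x i + - u i) = mv s P (\<lambda>i. x i - u i)" by (intro mv_cong) simp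
    moreover have "dot s (\<lambda>i\<in>{..<s}. x i + - u i) (mv s P (\<lambda>i. x i - u i)) = dot s (\<lambda>i. x i - u i) (mv s P (\<lambda>i. x i - u i))"
      by (intro dot_cong) auto
    ultimately show ?thesis by (simp add: g_def)
  qed
  have feq: "exp (- (1/2) * dot s x (mv s P x) + dot s (mv s P u) x)
      = exp ((1/2) * dot s u (mv s P u)) * g (\<lambda>i\<in>{..<s}. x i + - u i)" for x
    unfolding sh quad_shift[OF sym, of x u] by (simp add: exp_add[symmetric])
  have gi2: "integrable (lebesgue_vec s) (\<lambda>x. g (\<lambda>i\<in>{..<s}. x i + - u i))"
    using lv_shift(1)[OF gm, of "\<lambda>i. - u i"] gi by simp
  show "integrable (lebesgue_vec s) (\<lambda>x. exp (- (1/2) * dot s x (mv s P x) + dot s (mv s P u) x))"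
    unfolding feq by (intro integrable_mult_right gi2)
  show "integral\<^sup>L (lebesgue_vec s) (\<lambda>x. exp (- (1/2) * dot s x (mv s P x) + dot s (mv s P u) x))
       = exp ((1/2) * dot s u (mv s P u)) * integral\<^sup>L (lebesgue_vec s) (\<lambda>x. exp (- (1/2) * dot s x (mv s P x)))"
    unfolding feq using lv_shift(2)[OF gm, of "\<lambda>i. - u i"] by (simp add: g_def)
qed


lemma sqrt_inv_mult: "0 < (q::real) \<Longrightarrow> sqrt q * inverse q = sqrt (inverse q)"
proof -
  assume q: "0 < q"
  have "sqrt q * inverse q = sqrt q * inverse (sqrt q * sqrt q)" using q by simp
  also have "\<dots> = inverse (sqrt q)" using q by (simp add: field_simps)
  finally show ?thesis by (simp add: real_sqrt_inverse)
qed

lemma div_eq_block: "k * n \<le> i \<Longrightarrow> i < k * n + (n::nat) \<Longrightarrow> i div n = k"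
  by (rule div_nat_eqI) (simp_all add: mult.commute)

locale spins_setting =
  fixes N s :: nat
  assumes s0: "0 < s" and N0: "0 < N" and sN: "s dvd N"
begin

definition "n = N div s"
definition "cc = sqrt (real s / real N)"

lemma N_eq: "N = s * n" using sN by (simp add: n_def)
lemma n0: "0 < n" using N0 N_eq by (cases n) auto

lemma block_eq: "block N s k = {k * n ..< k * n + n}"
  by (simp add: block_def n_def add.commute)

lemma coef: "sqrt (real N / real s) * (real s / real N) = cc"
proof -
  have q: "0 < real N / real s" using s0 N0 by simp
  have "sqrt (real N / real s) * inverse (real N / real s) = sqrt (inverse (real N / real s))"
    by (rule sqrt_inv_mult[OF q])
  then show ?thesis by (simp add: cc_def)
qed

lemma mt_sum:
  "(\<Sum>k<s. y k * (sqrt (real N / real s) * magn N s \<sigma> k)) = (\<Sum>i<N. cc * y (i div n) * \<sigma> i)"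
proof -
  have "(\<Sum>k<s. y k * (sqrt (real N / real s) * magn N s \<sigma> k))
      = (\<Sum>k<s. \<Sum>i\<in>{k * n ..< k * n + n}. cc * y (i div n) * \<sigma> i)"
  proof (intro sum.cong refl)
    fix k
    have "y k * (sqrt (real N / real s) * magn N s \<sigma> k)
        = cc * y k * (\<Sum>i\<in>{k * n ..< k * n + n}. \<sigma> i)"
      unfolding magn_def block_eq coef[symmetric] by (simp only: mult.assoc mult.commute mult.left_commute)
    also have "\<dots> = (\<Sum>i\<in>{k * n ..< k * n + n}. cc * y k * \<sigma> i)"
      by (simp add: sum_distrib_left)
    also have "\<dots> = (\<Sum>i\<in>{k * n ..< k * n + n}. cc * y (i div n) * \<sigma> i)"
    proof (intro sum.cong refl)
      fix i assume "i \<in> {k * n ..< k * n + n}"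
      then have "i div n = k" by (intro div_eq_block) auto
      then show "cc * y k * \<sigma> i = cc * y (i div n) * \<sigma> i" by simp
    qed
    finally show "y k * (sqrt (real N / real s) * magn N s \<sigma> k)
        = (\<Sum>i\<in>{k * n ..< k * n + n}. cc * y (i div n) * \<sigma> i)" .
  qed
  also have "\<dots> = (\<Sum>i<s * n. cc * y (i div n) * \<sigma> i)" by (rule sum.nat_group)
  also have "\<dots> = (\<Sum>i<N. cc * y (i div n) * \<sigma> i)" by (simp only: N_eq[symmetric])
  finally show ?thesis .
qed

lemma spin_prod:
  "(\<Sum>\<sigma>\<in>spins N. (1/2) ^ N * exp (\<Sum>i<N. a i * \<sigma> i)) = (\<Prod>i<N. cosh (a i))"
proof -
  have "(\<Sum>\<sigma>\<in>spins N. (1/2) ^ N * exp (\<Sum>i<N. a i * \<sigma> i))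
      = (\<Sum>\<sigma>\<in>spins N. \<Prod>i<N. (1/2) * exp (a i * \<sigma> i))"
  proof (intro sum.cong refl)
    fix \<sigma> :: "nat \<Rightarrow> real"
    have "(1/2::real) ^ N = (\<Prod>i<N. 1/2)" by simp
    then have "(1/2) ^ N * exp (\<Sum>i<N. a i * \<sigma> i) = (\<Prod>i<N. 1/2) * (\<Prod>i<N. exp (a i * \<sigma> i))"
      by (simp add: exp_sum)
    also have "\<dots> = (\<Prod>i<N. (1/2) * exp (a i * \<sigma> i))" by (rule prod.distrib[symmetric])
    finally show "(1/2) ^ N * exp (\<Sum>i<N. a i * \<sigma> i) = (\<Prod>i<N. (1/2) * exp (a i * \<sigma> i))" .
  qed
  also have "\<dots> = (\<Prod>i<N. \<Sum>v\<in>{-1, 1}. (1/2) * exp (a i * v))"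
    unfolding spins_def by (rule prod_sum_PiE[symmetric]) auto
  also have "\<dots> = (\<Prod>i<N. cosh (a i))"
    by (intro prod.cong refl) (simp add: cosh_def field_simps)
  finally show ?thesis .
qed

lemma cosh_prod: "(\<Prod>i<N. cosh (cc * y (i div n))) = exp (real n * (\<Sum>k<s. ln (cosh (cc * y k))))"
proof -
  have "(\<Prod>i<N. cosh (cc * y (i div n))) = (\<Prod>i<s * n. cosh (cc * y (i div n)))"
    by (simp only: N_eq[symmetric])
  also have "\<dots> = (\<Prod>k<s. \<Prod>i\<in>{k * n ..< k * n + n}. cosh (cc * y (i div n)))"
    by (rule prod.nat_group[symmetric])
  also have "\<dots> = (\<Prod>k<s. \<Prod>i\<in>{k * n ..< k * n + n}. cosh (cc * y k))"
  proof (intro prod.cong refl)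
    fix k i assume "i \<in> {k * n ..< k * n + n}"
    then have "i div n = k" by (intro div_eq_block) auto
    then show "cosh (cc * y (i div n)) = cosh (cc * y k)" by simp
  qed
  also have "\<dots> = (\<Prod>k<s. cosh (cc * y k) ^ n)" by simp
  also have "\<dots> = (\<Prod>k<s. exp (real n * ln (cosh (cc * y k))))"
    by (intro prod.cong refl) (simp add: exp_of_nat_mult)
  also have "\<dots> = exp (real n * (\<Sum>k<s. ln (cosh (cc * y k))))"
    by (simp add: exp_sum sum_distrib_left)
  finally show ?thesis .
qed

lemma spin_sum:
  "(\<Sum>\<sigma>\<in>spins N. (1/2) ^ N * exp (\<Sum>k<s. y k * (sqrt (real N / real s) * magn N s \<sigma> k)))
    = exp (real n * (\<Sum>k<s. ln (cosh (cc * y k))))"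
proof -
  have "(\<Sum>\<sigma>\<in>spins N. (1/2) ^ N * exp (\<Sum>k<s. y k * (sqrt (real N / real s) * magn N s \<sigma> k)))
      = (\<Sum>\<sigma>\<in>spins N. (1/2) ^ N * exp (\<Sum>i<N. (cc * y (i div n)) * \<sigma> i))"
    by (simp add: mt_sum)
  also have "\<dots> = (\<Prod>i<N. cosh (cc * y (i div n)))" by (rule spin_prod)
  also have "\<dots> = exp (real n * (\<Sum>k<s. ln (cosh (cc * y k))))" by (rule cosh_prod)
  finally show ?thesis .
qed

lemma RN: "real N = real s * real n"
  using arg_cong[OF N_eq, of real] by simp

lemma n_real: "real N / real s = real n"
  using s0 by (simp add: RN)

lemma n_cc: "real n * cc\<^sup>2 = 1"
  using s0 N0 n0 by (simp add: cc_def RN)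

end


definition hh :: "real \<Rightarrow> real" where "hh y = y\<^sup>2 / 2 - ln (cosh y)"

lemma hh_G: "G_fun y = - hh y" by (simp add: G_fun_def hh_def)

lemma hh_deriv: "(hh has_real_derivative (y - tanh y)) (at y)"
proof -
  have c: "cosh y > 0" by simp
  have "((\<lambda>y. y\<^sup>2 / 2 - ln (cosh y)) has_real_derivative (2 * y / 2 - sinh y / cosh y)) (at y)"
    using c by (auto intro!: derivative_eq_intros)
  moreover have "2 * y / 2 - sinh y / cosh y = y - tanh y" by (simp add: tanh_def)
  ultimately show ?thesis unfolding hh_def by simp
qed

lemma tanh_lip: "x \<le> y \<Longrightarrow> x - tanh x \<le> y - tanh (y::real)"
proof -
  assume xy: "x \<le> y"
  show ?thesis
  proof (rule DERIV_nonneg_imp_nondecreasing[OF xy])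
    fix z :: real
    have "((\<lambda>z. z - tanh z) has_real_derivative (1 - (1 - (tanh z)\<^sup>2) * 1)) (at z)"
      by (auto intro!: derivative_eq_intros)
    then show "\<exists>d. ((\<lambda>z. z - tanh z) has_real_derivative d) (at z) \<and> 0 \<le> d"
      by (intro exI[of _ "1 - (1 - (tanh z)\<^sup>2) * 1"]) simp
  qed
qed

lemma hh_convex: "convex_on UNIV hh"
  by (rule convex_on_realI[where f' = "\<lambda>y. y - tanh y"]) (auto intro: hh_deriv tanh_lip)

lemma hh_ineq: "0 \<le> \<theta> \<Longrightarrow> \<theta> \<le> 1 \<Longrightarrow> hh (\<theta> * a + (1 - \<theta>) * b) \<le> \<theta> * hh a + (1 - \<theta>) * hh b"
  using convex_onD[OF hh_convex, of "1 - \<theta>" a b] by (simp add: add.commute)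

lemma half_lemma: "(Z::real) = \<theta> * X + (1 - \<theta>) * Y - \<theta> * (1 - \<theta>) * D \<Longrightarrow>
  (1/2) * Z = \<theta> * ((1/2) * X) + (1 - \<theta>) * ((1/2) * Y) - 1 / 2 * \<theta> * (1 - \<theta>) * D"
proof -
  assume h: "Z = \<theta> * X + (1 - \<theta>) * Y - \<theta> * (1 - \<theta>) * D"
  show ?thesis unfolding h by (simp add: field_simps)
qed

lemma sc_generic:
  fixes C :: "nat \<Rightarrow> nat \<Rightarrow> real"
  assumes \<kappa>: "0 \<le> \<kappa>"
  shows "strongly_convex s (\<lambda>x. (1/2) * (\<Sum>i<s. (x i)\<^sup>2) - \<kappa> * (\<Sum>k<s. G_fun (c * (\<Sum>j<s. C k j * x j))) + L)"
  unfolding strongly_convex_def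
proof (intro exI[of _ "1::real"] conjI allI ballI)
  show "(0::real) < 1" by simp
next
  fix x y :: "nat \<Rightarrow> real" and \<theta> :: real assume "\<theta> \<in> {0..1}"
  then have t0: "0 \<le> \<theta>" and t1: "\<theta> \<le> 1" by auto
  let ?z = "\<lambda>i. \<theta> * x i + (1 - \<theta>) * y i"
  have quad: "(1/2) * (\<Sum>i<s. (?z i)\<^sup>2) = \<theta> * ((1/2) * (\<Sum>i<s. (x i)\<^sup>2)) + (1 - \<theta>) * ((1/2) * (\<Sum>i<s. (y i)\<^sup>2))
      - 1 / 2 * \<theta> * (1 - \<theta>) * (\<Sum>i<s. (x i - y i)\<^sup>2)"
  proof -
    have "(?z i)\<^sup>2 = \<theta> * (x i)\<^sup>2 + (1 - \<theta>) * (y i)\<^sup>2 - \<theta> * (1 - \<theta>) * (x i - y i)\<^sup>2" for i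
      by (simp add: power2_eq_square algebra_simps)
    then have "(\<Sum>i<s. (?z i)\<^sup>2) = \<theta> * (\<Sum>i<s. (x i)\<^sup>2) + (1 - \<theta>) * (\<Sum>i<s. (y i)\<^sup>2) - \<theta> * (1 - \<theta>) * (\<Sum>i<s. (x i - y i)\<^sup>2)"
      by (simp add: sum.distrib sum_subtractf sum_distrib_left)
    then show ?thesis by (rule half_lemma)
  qed
  have lin: "c * (\<Sum>j<s. C k j * ?z j) = \<theta> * (c * (\<Sum>j<s. C k j * x j)) + (1 - \<theta>) * (c * (\<Sum>j<s. C k j * y j))" for k
  proof -
    have "(\<Sum>j<s. C k j * ?z j) = (\<Sum>j<s. \<theta> * (C k j * x j) + (1 - \<theta>) * (C k j * y j))"
      by (intro sum.cong refl) (simp add: algebra_simps)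
    also have "\<dots> = \<theta> * (\<Sum>j<s. C k j * x j) + (1 - \<theta>) * (\<Sum>j<s. C k j * y j)"
      by (simp only: sum.distrib sum_distrib_left[symmetric])
    finally have e: "(\<Sum>j<s. C k j * ?z j) = \<theta> * (\<Sum>j<s. C k j * x j) + (1 - \<theta>) * (\<Sum>j<s. C k j * y j)" .
    show ?thesis unfolding e by (simp add: algebra_simps)
  qed
  have conv: "- (\<Sum>k<s. G_fun (c * (\<Sum>j<s. C k j * ?z j)))
      \<le> \<theta> * (- (\<Sum>k<s. G_fun (c * (\<Sum>j<s. C k j * x j)))) + (1 - \<theta>) * (- (\<Sum>k<s. G_fun (c * (\<Sum>j<s. C k j * y j))))"
  proof -
    have "- (\<Sum>k<s. G_fun (c * (\<Sum>j<s. C k j * ?z j))) = (\<Sum>k<s. hh (c * (\<Sum>j<s. C k j * ?z j)))"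
      by (simp add: hh_G sum_negf)
    also have "\<dots> \<le> (\<Sum>k<s. \<theta> * hh (c * (\<Sum>j<s. C k j * x j)) + (1 - \<theta>) * hh (c * (\<Sum>j<s. C k j * y j)))"
      unfolding lin by (intro sum_mono hh_ineq t0 t1)
    also have "\<dots> = \<theta> * (- (\<Sum>k<s. G_fun (c * (\<Sum>j<s. C k j * x j)))) + (1 - \<theta>) * (- (\<Sum>k<s. G_fun (c * (\<Sum>j<s. C k j * y j))))"
      by (simp add: hh_G sum.distrib sum_distrib_left sum_negf)
    finally show ?thesis .
  qed
  from mult_left_mono[OF conv \<kappa>]
  have conv2: "- \<kappa> * (\<Sum>k<s. G_fun (c * (\<Sum>j<s. C k j * ?z j)))
      \<le> \<theta> * (- \<kappa> * (\<Sum>k<s. G_fun (c * (\<Sum>j<s. C k j * x j)))) + (1 - \<theta>) * (- \<kappa> * (\<Sum>k<s. G_fun (c * (\<Sum>j<s. C k j * y j))))"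
    by (simp add: algebra_simps)
  show "(1/2) * (\<Sum>i<s. (?z i)\<^sup>2) - \<kappa> * (\<Sum>k<s. G_fun (c * (\<Sum>j<s. C k j * ?z j))) + L
      \<le> \<theta> * ((1/2) * (\<Sum>i<s. (x i)\<^sup>2) - \<kappa> * (\<Sum>k<s. G_fun (c * (\<Sum>j<s. C k j * x j))) + L)
       + (1 - \<theta>) * ((1/2) * (\<Sum>i<s. (y i)\<^sup>2) - \<kappa> * (\<Sum>k<s. G_fun (c * (\<Sum>j<s. C k j * y j))) + L)
       - 1 / 2 * \<theta> * (1 - \<theta>) * (\<Sum>i<s. (x i - y i)\<^sup>2)"
    using quad conv2 by (simp add: algebra_simps)
qed


lemma normal_mgf_eq: "std_normal_density w * exp (a * w) = exp (a\<^sup>2 / 2) * normal_density a 1 w"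
proof -
  have "exp (- w\<^sup>2 / 2) * exp (a * w) = exp (a\<^sup>2 / 2) * exp (- (w - a)\<^sup>2 / 2)"
    by (simp add: exp_add[symmetric] power2_eq_square field_simps)
  then show ?thesis by (simp add: std_normal_density_def normal_density_def)
qed

lemma normal_mgf:
  shows "integrable std_normal_distribution (\<lambda>w. exp (a * w))"
    and "integral\<^sup>L std_normal_distribution (\<lambda>w. exp (a * w)) = exp (a\<^sup>2 / 2)"
proof -
  have i: "integrable lborel (\<lambda>w. std_normal_density w * exp (a * w))"
    unfolding normal_mgf_eq by (intro integrable_mult_right integrable_normal_density) auto
  show "integrable std_normal_distribution (\<lambda>w. exp (a * w))"
    using i by (subst integrable_density) auto
  have "integral\<^sup>L std_normal_distribution (\<lambda>w. exp (a * w)) = integral\<^sup>L lborel (\<lambda>w. std_normal_density w * exp (a * w))"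
    by (subst integral_density) auto
  also have "\<dots> = exp (a\<^sup>2 / 2)" unfolding normal_mgf_eq by simp
  finally show "integral\<^sup>L std_normal_distribution (\<lambda>w. exp (a * w)) = exp (a\<^sup>2 / 2)" .
qed

lemma matvec_meas: "mat_vec s Q \<in> measurable (std_gauss_vec s) (lebesgue_vec s)"
  unfolding mat_vec_def std_gauss_vec_def lebesgue_vec_def
  by (intro measurable_restrict) measurable

lemma gauss_vec_mgf:
  assumes Qs: "mat_sym s Q" and QQ: "mat_mul s Q Q = W"
  shows "integrable (distr (std_gauss_vec s) (lebesgue_vec s) (mat_vec s Q)) (\<lambda>z. exp (\<Sum>k<s. t k * z k))"
    and "integral\<^sup>L (distr (std_gauss_vec s) (lebesgue_vec s) (mat_vec s Q)) (\<lambda>z. exp (\<Sum>k<s. t k * z k))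
         = exp ((1/2) * dot s t (mv s W t))"
proof -
  interpret sn: product_sigma_finite "\<lambda>_::nat. std_normal_distribution" by (rule stdn_psf)
  define a where "a = mv s Q t"
  have fm: "(\<lambda>z. exp (\<Sum>k<s. t k * z k)) \<in> borel_measurable (lebesgue_vec s)"
    unfolding lebesgue_vec_def by measurable
  have comp: "exp (\<Sum>k<s. t k * mat_vec s Q w k) = (\<Prod>j<s. exp (a j * w j))" for w
  proof -
    have "(\<Sum>k<s. t k * mat_vec s Q w k) = (\<Sum>k<s. \<Sum>j<s. t k * Q k j * w j)"
      by (simp add: mat_vec_def sum_distrib_left mult.assoc)
    also have "\<dots> = (\<Sum>j<s. \<Sum>k<s. t k * Q k j * w j)"
      by (rule sum.swap[of "\<lambda>k j. t k * Q k j * w j"])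
    also have "\<dots> = (\<Sum>j<s. a j * w j)"
      unfolding a_def mv_def
    proof (intro sum.cong refl)
      fix j assume j: "j \<in> {..<s}"
      have "(\<Sum>k<s. t k * Q k j * w j) = (\<Sum>k<s. Q j k * t k) * w j"
        unfolding sum_distrib_right
        using Qs j by (intro sum.cong refl) (auto simp: mat_sym_def mult.commute)
      then show "(\<Sum>k<s. t k * Q k j * w j) = (\<Sum>k<s. Q j k * t k) * w j" .
    qed
    finally show ?thesis by (simp add: exp_sum)
  qed
  have pint: "integrable (std_gauss_vec s) (\<lambda>w. \<Prod>j<s. exp (a j * w j))"
    unfolding std_gauss_vec_def by (intro sn.product_integrable_prod normal_mgf(1)) auto
  show "integrable (distr (std_gauss_vec s) (lebesgue_vec s) (mat_vec s Q)) (\<lambda>z. exp (\<Sum>k<s. t k * z k))"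
    using pint by (simp add: integrable_distr_eq[OF matvec_meas fm] comp)
  have "integral\<^sup>L (distr (std_gauss_vec s) (lebesgue_vec s) (mat_vec s Q)) (\<lambda>z. exp (\<Sum>k<s. t k * z k))
      = integral\<^sup>L (std_gauss_vec s) (\<lambda>w. \<Prod>j<s. exp (a j * w j))"
    by (simp add: integral_distr[OF matvec_meas fm] comp)
  also have "\<dots> = (\<Prod>j<s. exp ((a j)\<^sup>2 / 2))"
    unfolding std_gauss_vec_def by (subst sn.product_integral_prod) (auto simp: normal_mgf)
  also have "\<dots> = exp ((1/2) * dot s a a)"
    by (simp add: exp_sum[symmetric] dot_def power2_eq_square sum_divide_distrib)
  also have "dot s a a = dot s t (mv s W t)"
  proof -
    have "dot s a a = dot s t (mv s Q (mv s Q t))" unfolding a_def by (rule dot_mv_sym[OF Qs, symmetric])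
    also have "\<dots> = dot s t (mv s W t)"
      by (intro dot_cong refl) (simp add: mv_mul[symmetric] QQ)
    finally show ?thesis .
  qed
  finally show "integral\<^sup>L (distr (std_gauss_vec s) (lebesgue_vec s) (mat_vec s Q)) (\<lambda>z. exp (\<Sum>k<s. t k * z k))
         = exp ((1/2) * dot s t (mv s W t))" .
qed


lemma sym_sandwich: assumes M: "mat_sym s M" and K: "mat_sym s K"
  shows "mat_sym s (mat_mul s M (mat_mul s K M))"
  unfolding mat_sym_def
proof (intro allI impI)
  fix i j assume ij: "i < s" "j < s"
  have e: "mat_mul s M (mat_mul s K M) i j = (\<Sum>a<s. \<Sum>b<s. M i a * K a b * M b j)" if "i < s" "j < s" for i j
    using that by (simp add: mat_mul_def sum_distrib_left mult.assoc)
  have "mat_mul s M (mat_mul s K M) j i = (\<Sum>a<s. \<Sum>b<s. M j a * K a b * M b i)" using e ij by simp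
  also have "\<dots> = (\<Sum>a<s. \<Sum>b<s. M i b * K b a * M a j)"
    using M K ij by (intro sum.cong refl) (auto simp: mat_sym_def mult.commute mult.left_commute)
  also have "\<dots> = (\<Sum>b<s. \<Sum>a<s. M i b * K b a * M a j)"
    by (rule sum.swap[of "\<lambda>a b. M i b * K b a * M a j"])
  also have "\<dots> = mat_mul s M (mat_mul s K M) i j" using e ij by simp
  finally show "mat_mul s M (mat_mul s K M) i j = mat_mul s M (mat_mul s K M) j i" by simp
qed

lemma mv_sub_mat: "i < s \<Longrightarrow> mv s (mat_sub s M K) w i = mv s M w i - mv s K w i"
  by (simp add: mv_def mat_sub_def left_diff_distrib sum_subtractf)

locale main = model s \<alpha> \<beta> + spins_setting N s for N s :: nat and \<alpha> \<beta> :: real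
begin

definition "CC = mat_mul s A R"
definition "P = mat_mul s R (mat_mul s A R)"
definition "mt \<sigma> = (\<lambda>k. sqrt (real N / real s) * magn N s \<sigma> k)"
definition "vv \<sigma> t' = (\<lambda>k. mv s A (mt \<sigma>) k + t' k)"
definition "uu \<sigma> t' = mv s S (mv s W (vv \<sigma> t'))"
definition "cP = integral\<^sup>L (lebesgue_vec s) (\<lambda>x. exp (- (1/2) * dot s x (mv s P x)))"

lemma P_sym: "mat_sym s P" unfolding P_def by (intro sym_sandwich R_sym A_sy)

lemma mvP: "i < s \<Longrightarrow> mv s P x i = mv s R (mv s A (mv s R x)) i"
proof -
  assume i: "i < s"
  have "mv s P x i = mv s R (mv s (mat_mul s A R) x) i" unfolding P_def using i by (rule mv_mul)
  also have "mv s (mat_mul s A R) x = (\<lambda>i. if i < s then mv s A (mv s R x) i else mv s (mat_mul s A R) x i)"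
    by (auto simp: mv_mul)
  also have "mv s R \<dots> = mv s R (mv s A (mv s R x))" by (intro mv_cong) auto
  finally show ?thesis .
qed

lemma mvC: "k < s \<Longrightarrow> mv s CC x k = mv s A (mv s R x) k"
  unfolding CC_def by (rule mv_mul)

lemma quadP: "dot s x (mv s P x) = dot s x x + (\<Sum>k<s. (mv s CC x k)\<^sup>2)"
proof -
  define w where "w = mv s R x"
  have "dot s x (mv s P x) = dot s x (mv s R (mv s A w))"
    unfolding w_def by (intro dot_cong refl) (simp add: mvP)
  also have "\<dots> = dot s w (mv s A w)" unfolding w_def by (rule dot_mv_sym[OF R_sym])
  finally have 1: "dot s x (mv s P x) = dot s w (mv s A w)" .
  have "dot s x x = dot s (mv s S w) (mv s S w)"
    unfolding w_def by (intro dot_cong) (simp_all add: mv_inv[OF SR])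
  also have "\<dots> = dot s w (mv s S (mv s S w))" by (rule dot_mv_sym[OF S_sym, symmetric])
  also have "\<dots> = dot s w (mv s (mat_sub s A (mat_mul s A A)) w)"
    by (intro dot_cong refl) (simp add: mv_mul[symmetric] SS)
  also have "\<dots> = dot s w (mv s A w) - dot s w (mv s A (mv s A w))"
    by (simp add: dot_def mv_sub_mat mv_mul right_diff_distrib sum_subtractf)
  finally have 2: "dot s x x = dot s w (mv s A w) - dot s w (mv s A (mv s A w))" .
  have "(\<Sum>k<s. (mv s CC x k)\<^sup>2) = dot s (mv s A w) (mv s A w)"
    unfolding dot_def w_def by (intro sum.cong refl) (simp add: mvC power2_eq_square)
  also have "\<dots> = dot s w (mv s A (mv s A w))" by (rule dot_mv_sym[OF A_sy, symmetric])
  finally have 3: "(\<Sum>k<s. (mv s CC x k)\<^sup>2) = dot s w (mv s A (mv s A w))" .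
  show ?thesis using 1 2 3 by simp
qed

lemma quad_ge: "dot s x x \<le> dot s x (mv s P x)"
  unfolding quadP by (simp add: sum_nonneg)

lemma Pu: "i < s \<Longrightarrow> mv s P (uu \<sigma> t') i = mv s R (vv \<sigma> t') i"
proof -
  assume i: "i < s"
  have "mv s P (uu \<sigma> t') i = mv s R (mv s A (mv s R (uu \<sigma> t'))) i" using i by (rule mvP)
  also have "mv s R (uu \<sigma> t') = (\<lambda>i. if i < s then mv s W (vv \<sigma> t') i else mv s R (uu \<sigma> t') i)"
    unfolding uu_def by (auto simp: mv_inv[OF RS])
  also have "mv s A \<dots> = mv s A (mv s W (vv \<sigma> t'))" by (intro mv_cong) auto
  also have "\<dots> = (\<lambda>i. if i < s then vv \<sigma> t' i else mv s A (mv s W (vv \<sigma> t')) i)"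
    by (auto simp: mv_inv[OF AW])
  also have "mv s R \<dots> = mv s R (vv \<sigma> t')" by (intro mv_cong) auto
  finally show ?thesis .
qed

lemma linP: "(\<Sum>k<s. t' k * mv s R x k) + (\<Sum>k<s. mv s CC x k * mt \<sigma> k) = dot s (mv s P (uu \<sigma> t')) x"
proof -
  have a: "(\<Sum>k<s. t' k * mv s R x k) = dot s (mv s R t') x"
    unfolding dot_def[symmetric] by (rule dot_mv_sym[OF R_sym])
  have "(\<Sum>k<s. mv s CC x k * mt \<sigma> k) = dot s (mv s A (mv s R x)) (mt \<sigma>)"
    unfolding dot_def by (intro sum.cong refl) (simp add: mvC)
  also have "\<dots> = dot s (mv s R x) (mv s A (mt \<sigma>))" by (rule dot_mv_sym[OF A_sy, symmetric])
  also have "\<dots> = dot s (mv s A (mt \<sigma>)) (mv s R x)" by (rule dot_comm)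
  also have "\<dots> = dot s (mv s R (mv s A (mt \<sigma>))) x" by (rule dot_mv_sym[OF R_sym])
  finally have b: "(\<Sum>k<s. mv s CC x k * mt \<sigma> k) = dot s (mv s R (mv s A (mt \<sigma>))) x" .
  have "dot s (mv s P (uu \<sigma> t')) x = dot s (mv s R (vv \<sigma> t')) x"
    by (intro dot_cong refl) (simp add: Pu)
  also have "mv s R (vv \<sigma> t') = (\<lambda>i. mv s R (mv s A (mt \<sigma>)) i + mv s R t' i)"
    unfolding vv_def by (intro ext) (rule mv_add)
  finally have c: "dot s (mv s P (uu \<sigma> t')) x = dot s (mv s R (mv s A (mt \<sigma>))) x + dot s (mv s R t') x"
    by (simp add: dot_add_left)
  show ?thesis using a b c by simp
qed

lemma uPu: "dot s (uu \<sigma> t') (mv s P (uu \<sigma> t')) = dot s (vv \<sigma> t') (mv s W (vv \<sigma> t'))"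
proof -
  have "dot s (uu \<sigma> t') (mv s P (uu \<sigma> t')) = dot s (mv s S (mv s W (vv \<sigma> t'))) (mv s R (vv \<sigma> t'))"
    unfolding uu_def by (intro dot_cong refl) (simp add: Pu[unfolded uu_def])
  also have "\<dots> = dot s (mv s W (vv \<sigma> t')) (mv s S (mv s R (vv \<sigma> t')))"
    by (rule dot_mv_sym[OF S_sym, symmetric])
  also have "\<dots> = dot s (mv s W (vv \<sigma> t')) (vv \<sigma> t')"
    by (intro dot_cong refl) (simp add: mv_inv[OF SR])
  also have "\<dots> = dot s (vv \<sigma> t') (mv s W (vv \<sigma> t'))" by (rule dot_comm)
  finally show ?thesis .
qed

lemma vWv: "dot s (vv \<sigma> t') (mv s W (vv \<sigma> t'))
   = dot s (mt \<sigma>) (mv s A (mt \<sigma>)) + 2 * dot s t' (mt \<sigma>) + dot s t' (mv s W t')"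
proof -
  let ?m = "mt \<sigma>"
  have Wv: "dot s (vv \<sigma> t') (mv s W (vv \<sigma> t')) = dot s (vv \<sigma> t') (\<lambda>i. ?m i + mv s W t' i)"
  proof (intro dot_cong refl)
    fix i assume i: "i < s"
    have "mv s W (vv \<sigma> t') i = mv s W (mv s A ?m) i + mv s W t' i" unfolding vv_def by (rule mv_add)
    then show "mv s W (vv \<sigma> t') i = ?m i + mv s W t' i" using i by (simp add: mv_inv[OF WA])
  qed
  have "dot s (vv \<sigma> t') (\<lambda>i. ?m i + mv s W t' i)
      = dot s (mv s A ?m) ?m + dot s (mv s A ?m) (mv s W t') + dot s t' ?m + dot s t' (mv s W t')"
    unfolding vv_def dot_add_left dot_add_right by simp
  also have "dot s (mv s A ?m) ?m = dot s ?m (mv s A ?m)" by (rule dot_comm)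
  also have "dot s (mv s A ?m) (mv s W t') = dot s ?m (mv s A (mv s W t'))" by (rule dot_mv_sym[OF A_sy, symmetric])
  also have "\<dots> = dot s ?m t'" by (intro dot_cong refl) (simp add: mv_inv[OF AW])
  also have "\<dots> = dot s t' ?m" by (rule dot_comm)
  finally show ?thesis using Wv by simp
qed

lemma rho_decomp:
  "rho_unnorm N s CC x * exp (\<Sum>k<s. t' k * mv s R x k)
    = (\<Sum>\<sigma>\<in>spins N. (1/2) ^ N * exp (- (1/2) * dot s x (mv s P x) + dot s (mv s P (uu \<sigma> t')) x))"
proof -
  define y where "y = mv s CC x"
  have y: "(\<Sum>j<s. CC k j * x j) = y k" for k by (simp add: y_def mv_def)
  have G: "real n * (\<Sum>k<s. G_fun (cc * y k)) = real n * (\<Sum>k<s. ln (cosh (cc * y k))) - (1/2) * (\<Sum>k<s. (y k)\<^sup>2)"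
  proof -
    have "real n * (\<Sum>k<s. G_fun (cc * y k)) = real n * (\<Sum>k<s. ln (cosh (cc * y k))) - real n * cc\<^sup>2 * (\<Sum>k<s. (y k)\<^sup>2) / 2"
      by (simp add: G_fun_def sum_subtractf right_diff_distrib sum_distrib_left sum_divide_distrib power_mult_distrib mult.assoc)
    then show ?thesis using n_cc by simp
  qed
  define E where "E = - (1/2) * (\<Sum>i<s. (x i)\<^sup>2) - (1/2) * (\<Sum>k<s. (y k)\<^sup>2) + (\<Sum>k<s. t' k * mv s R x k)"
  have "rho_unnorm N s CC x * exp (\<Sum>k<s. t' k * mv s R x k)
      = exp E * exp (real n * (\<Sum>k<s. ln (cosh (cc * y k))))"
    unfolding rho_unnorm_def y n_real cc_def[symmetric] G E_def by (simp add: exp_add[symmetric] algebra_simps)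
  also have "exp (real n * (\<Sum>k<s. ln (cosh (cc * y k))))
      = (\<Sum>\<sigma>\<in>spins N. (1/2) ^ N * exp (\<Sum>k<s. y k * mt \<sigma> k))"
    unfolding mt_def by (rule spin_sum[symmetric])
  also have "exp E * \<dots> = (\<Sum>\<sigma>\<in>spins N. (1/2) ^ N * exp (E + (\<Sum>k<s. y k * mt \<sigma> k)))"
    by (simp add: sum_distrib_left exp_add mult.left_commute)
  also have "\<dots> = (\<Sum>\<sigma>\<in>spins N. (1/2) ^ N * exp (- (1/2) * dot s x (mv s P x) + dot s (mv s P (uu \<sigma> t')) x))"
  proof (intro sum.cong refl)
    fix \<sigma>
    have "E + (\<Sum>k<s. y k * mt \<sigma> k) = - (1/2) * dot s x (mv s P x) + dot s (mv s P (uu \<sigma> t')) x"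
      unfolding E_def quadP linP[symmetric] y_def by (simp add: dot_def power2_eq_square algebra_simps)
    then show "(1/2) ^ N * exp (E + (\<Sum>k<s. y k * mt \<sigma> k)) = (1/2) ^ N * exp (- (1/2) * dot s x (mv s P x) + dot s (mv s P (uu \<sigma> t')) x)"
      by simp
  qed
  finally show ?thesis .
qed

lemma I_int: "integrable (lebesgue_vec s) (\<lambda>x. rho_unnorm N s CC x * exp (\<Sum>k<s. t' k * mv s R x k))"
  unfolding rho_decomp
proof (rule Bochner_Integration.integrable_sum)
  fix \<sigma> assume "\<sigma> \<in> spins N"
  show "integrable (lebesgue_vec s) (\<lambda>x. (1/2) ^ N * exp (- (1/2) * dot s x (mv s P x) + dot s (mv s P (uu \<sigma> t')) x))"
    by (intro integrable_mult_right gq(3)[OF P_sym quad_ge])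
qed

lemma I_val: "integral\<^sup>L (lebesgue_vec s) (\<lambda>x. rho_unnorm N s CC x * exp (\<Sum>k<s. t' k * mv s R x k))
   = (\<Sum>\<sigma>\<in>spins N. (1/2) ^ N * exp ((1/2) * dot s (vv \<sigma> t') (mv s W (vv \<sigma> t')))) * cP"
proof -
  have "integral\<^sup>L (lebesgue_vec s) (\<lambda>x. rho_unnorm N s CC x * exp (\<Sum>k<s. t' k * mv s R x k))
    = (\<Sum>\<sigma>\<in>spins N. integral\<^sup>L (lebesgue_vec s) (\<lambda>x. (1/2) ^ N * exp (- (1/2) * dot s x (mv s P x) + dot s (mv s P (uu \<sigma> t')) x)))"
    unfolding rho_decomp
    by (rule Bochner_Integration.integral_sum) (intro integrable_mult_right gq(3)[OF P_sym quad_ge])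
  also have "\<dots> = (\<Sum>\<sigma>\<in>spins N. (1/2) ^ N * (exp ((1/2) * dot s (vv \<sigma> t') (mv s W (vv \<sigma> t'))) * cP))"
  proof (intro sum.cong refl)
    fix \<sigma>
    show "integral\<^sup>L (lebesgue_vec s) (\<lambda>x. (1/2) ^ N * exp (- (1/2) * dot s x (mv s P x) + dot s (mv s P (uu \<sigma> t')) x))
      = (1/2) ^ N * (exp ((1/2) * dot s (vv \<sigma> t') (mv s W (vv \<sigma> t'))) * cP)"
      unfolding integral_mult_right_zero gq(4)[OF P_sym quad_ge] uPu cP_def by simp
  qed
  also have "\<dots> = (\<Sum>\<sigma>\<in>spins N. (1/2) ^ N * exp ((1/2) * dot s (vv \<sigma> t') (mv s W (vv \<sigma> t')))) * cP"
    by (simp add: sum_distrib_right mult.assoc)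
  finally show ?thesis .
qed

lemma cP_pos: "0 < cP" unfolding cP_def by (rule gq(2)[OF P_sym quad_ge])

end


context main
begin

lemma gibbs_eq: "gibbs_weight N s A \<sigma> = (1/2) ^ N * exp ((1/2) * dot s (mt \<sigma>) (mv s A (mt \<sigma>)))"
proof -
  let ?q = "sqrt (real N / real s)"
  have sq: "?q * ?q = real N / real s" by simp
  have "dot s (mt \<sigma>) (mv s A (mt \<sigma>)) = (\<Sum>k<s. \<Sum>l<s. (?q * ?q) * (magn N s \<sigma> k * A k l * magn N s \<sigma> l))"
    unfolding dot_def mv_def mt_def sum_distrib_left
    by (intro sum.cong refl) (simp only: mult.assoc mult.commute mult.left_commute)
  also have "\<dots> = (real N / real s) * (\<Sum>k<s. \<Sum>l<s. magn N s \<sigma> k * A k l * magn N s \<sigma> l)"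
    unfolding sq by (simp add: sum_distrib_left)
  finally have "(1/2) * dot s (mt \<sigma>) (mv s A (mt \<sigma>)) = real N / (2 * real s) * (\<Sum>k<s. \<Sum>l<s. magn N s \<sigma> k * A k l * magn N s \<sigma> l)"
    by simp
  then show ?thesis unfolding gibbs_weight_def by (simp add: mult.commute)
qed

lemma spins_fin: "finite (spins N)"
  unfolding spins_def by (intro finite_PiE) auto

lemma spins_ne: "spins N \<noteq> {}"
  unfolding spins_def by (simp add: PiE_eq_empty_iff)

lemma gw_pos: "0 < gibbs_weight N s A \<sigma>"
  unfolding gibbs_weight_def by simp

lemma final:
  "integrable (lebesgue_vec s) (rho_unnorm N s CC) \<and> 0 < integral\<^sup>L (lebesgue_vec s) (rho_unnorm N s CC)
   \<and> (\<exists>U. strongly_convex s U \<and> (\<forall>x\<in>space (lebesgue_vec s).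
        rho_unnorm N s CC x / integral\<^sup>L (lebesgue_vec s) (rho_unnorm N s CC) = exp (- U x)))
   \<and> integrable (gauss_vec s (mat_inv s A)) (\<lambda>z. \<Sum>\<sigma>\<in>spins N. gibbs_prob N s A \<sigma> *
              exp (\<Sum>k<s. t k * (z k + sqrt (real N / real s) * magn N s \<sigma> k)))
   \<and> integrable (lebesgue_vec s) (\<lambda>x. rho_unnorm N s CC x / integral\<^sup>L (lebesgue_vec s) (rho_unnorm N s CC)
              * exp (\<Sum>k<s. t k * mat_vec s R x k))
   \<and> integral\<^sup>L (gauss_vec s (mat_inv s A)) (\<lambda>z. \<Sum>\<sigma>\<in>spins N. gibbs_prob N s A \<sigma> *
              exp (\<Sum>k<s. t k * (z k + sqrt (real N / real s) * magn N s \<sigma> k)))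
     = integral\<^sup>L (lebesgue_vec s) (\<lambda>x. rho_unnorm N s CC x / integral\<^sup>L (lebesgue_vec s) (rho_unnorm N s CC)
              * exp (\<Sum>k<s. t k * mat_vec s R x k))"
proof -
  define Z where "Z = integral\<^sup>L (lebesgue_vec s) (rho_unnorm N s CC)"
  define Zg where "Zg = (\<Sum>\<sigma>\<in>spins N. gibbs_weight N s A \<sigma>)"
  have rint: "integrable (lebesgue_vec s) (rho_unnorm N s CC)"
    using I_int[of "\<lambda>_. 0"] by simp
  have vW0: "dot s (vv \<sigma> (\<lambda>_. 0)) (mv s W (vv \<sigma> (\<lambda>_. 0))) = dot s (mt \<sigma>) (mv s A (mt \<sigma>))" for \<sigma>
    using vWv[of \<sigma> "\<lambda>_. 0"] by (simp add: dot_def)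
  have Zval: "Z = Zg * cP"
  proof -
    have "Z = integral\<^sup>L (lebesgue_vec s) (\<lambda>x. rho_unnorm N s CC x * exp (\<Sum>k<s. (\<lambda>_. 0) k * mv s R x k))"
      by (simp add: Z_def)
    also have "\<dots> = (\<Sum>\<sigma>\<in>spins N. (1/2) ^ N * exp ((1/2) * dot s (vv \<sigma> (\<lambda>_. 0)) (mv s W (vv \<sigma> (\<lambda>_. 0))))) * cP"
      by (rule I_val)
    also have "\<dots> = Zg * cP" unfolding Zg_def vW0 gibbs_eq ..
    finally show ?thesis .
  qed
  have Zg_pos: "0 < Zg" unfolding Zg_def using spins_fin spins_ne gw_pos by (intro sum_pos) auto
  have Zpos: "0 < Z" unfolding Zval using Zg_pos cP_pos by simp
  define U where "U = (\<lambda>x. (1/2) * (\<Sum>i<s. (x i)\<^sup>2)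
      - (real N / real s) * (\<Sum>k<s. G_fun (sqrt (real s / real N) * (\<Sum>j<s. CC k j * x j))) + ln Z)"
  have Usc: "strongly_convex s U" unfolding U_def by (rule sc_generic) simp
  have Ueq: "rho_unnorm N s CC x / Z = exp (- U x)" for x
  proof -
    have "- U x = (- (1/2) * (\<Sum>i<s. (x i)\<^sup>2)
      + real N / real s * (\<Sum>k<s. G_fun (sqrt (real s / real N) * (\<Sum>j<s. CC k j * x j)))) - ln Z"
      unfolding U_def by simp
    then have "exp (- U x) = rho_unnorm N s CC x / exp (ln Z)"
      unfolding rho_unnorm_def by (simp add: exp_diff)
    then show ?thesis using Zpos by simp
  qed
  define Kt where "Kt = (\<Sum>\<sigma>\<in>spins N. gibbs_prob N s A \<sigma> * exp (dot s t (mt \<sigma>)))"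
  have lhs_eq: "(\<Sum>\<sigma>\<in>spins N. gibbs_prob N s A \<sigma> * exp (\<Sum>k<s. t k * (z k + sqrt (real N / real s) * magn N s \<sigma> k)))
      = Kt * exp (\<Sum>k<s. t k * z k)" for z
  proof -
    have "(\<Sum>k<s. t k * (z k + sqrt (real N / real s) * magn N s \<sigma> k)) = (\<Sum>k<s. t k * z k) + dot s t (mt \<sigma>)" for \<sigma>
      by (simp add: dot_def mt_def distrib_left sum.distrib)
    then show ?thesis by (simp add: Kt_def exp_add sum_distrib_left ac_simps)
  qed
  have gv: "gauss_vec s (mat_inv s A) = distr (std_gauss_vec s) (lebesgue_vec s) (mat_vec s Q)"
    by (simp add: gauss_vec_def inv_A sqrt_W)
  have L1: "integrable (gauss_vec s (mat_inv s A)) (\<lambda>z. \<Sum>\<sigma>\<in>spins N. gibbs_prob N s A \<sigma> *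
              exp (\<Sum>k<s. t k * (z k + sqrt (real N / real s) * magn N s \<sigma> k)))"
    unfolding lhs_eq gv by (intro integrable_mult_right gauss_vec_mgf(1)[OF Q_sym QQ])
  have L2: "integral\<^sup>L (gauss_vec s (mat_inv s A)) (\<lambda>z. \<Sum>\<sigma>\<in>spins N. gibbs_prob N s A \<sigma> *
              exp (\<Sum>k<s. t k * (z k + sqrt (real N / real s) * magn N s \<sigma> k)))
      = Kt * exp ((1/2) * dot s t (mv s W t))"
    unfolding lhs_eq gv integral_mult_right_zero gauss_vec_mgf(2)[OF Q_sym QQ] ..
  have rhs_eq: "rho_unnorm N s CC x / Z * exp (\<Sum>k<s. t k * mat_vec s R x k)
      = (1 / Z) * (rho_unnorm N s CC x * exp (\<Sum>k<s. t k * mv s R x k))" for x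
  proof -
    have "(\<Sum>k<s. t k * mat_vec s R x k) = (\<Sum>k<s. t k * mv s R x k)"
      by (intro sum.cong refl) (simp add: mat_vec_def mv_def)
    then show ?thesis by simp
  qed
  have R1: "integrable (lebesgue_vec s) (\<lambda>x. rho_unnorm N s CC x / Z * exp (\<Sum>k<s. t k * mat_vec s R x k))"
    unfolding rhs_eq by (intro integrable_mult_right I_int)
  have S1: "(\<Sum>\<sigma>\<in>spins N. (1/2) ^ N * exp ((1/2) * dot s (vv \<sigma> t) (mv s W (vv \<sigma> t))))
      = (\<Sum>\<sigma>\<in>spins N. gibbs_weight N s A \<sigma> * exp (dot s t (mt \<sigma>))) * exp ((1/2) * dot s t (mv s W t))"
    unfolding sum_distrib_right
  proof (intro sum.cong refl)
    fix \<sigma>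
    have "(1/2) * dot s (vv \<sigma> t) (mv s W (vv \<sigma> t))
        = (1/2) * dot s (mt \<sigma>) (mv s A (mt \<sigma>)) + dot s t (mt \<sigma>) + (1/2) * dot s t (mv s W t)"
      unfolding vWv by (simp add: algebra_simps)
    then have "exp ((1/2) * dot s (vv \<sigma> t) (mv s W (vv \<sigma> t)))
        = exp ((1/2) * dot s (mt \<sigma>) (mv s A (mt \<sigma>))) * exp (dot s t (mt \<sigma>)) * exp ((1/2) * dot s t (mv s W t))"
      by (simp only: exp_add)
    then show "(1/2) ^ N * exp ((1/2) * dot s (vv \<sigma> t) (mv s W (vv \<sigma> t)))
        = gibbs_weight N s A \<sigma> * exp (dot s t (mt \<sigma>)) * exp ((1/2) * dot s t (mv s W t))"
      unfolding gibbs_eq by (simp only: mult.assoc)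
  qed
  have Kt_eq: "Kt = (\<Sum>\<sigma>\<in>spins N. gibbs_weight N s A \<sigma> * exp (dot s t (mt \<sigma>))) / Zg"
    unfolding Kt_def gibbs_prob_def Zg_def[symmetric] by (simp add: sum_divide_distrib)
  have R2: "integral\<^sup>L (lebesgue_vec s) (\<lambda>x. rho_unnorm N s CC x / Z * exp (\<Sum>k<s. t k * mat_vec s R x k))
      = Kt * exp ((1/2) * dot s t (mv s W t))"
  proof -
    have "integral\<^sup>L (lebesgue_vec s) (\<lambda>x. rho_unnorm N s CC x / Z * exp (\<Sum>k<s. t k * mat_vec s R x k))
        = (1 / Z) * ((\<Sum>\<sigma>\<in>spins N. (1/2) ^ N * exp ((1/2) * dot s (vv \<sigma> t) (mv s W (vv \<sigma> t)))) * cP)"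
      unfolding rhs_eq integral_mult_right_zero I_val ..
    also have "\<dots> = Kt * exp ((1/2) * dot s t (mv s W t))"
      unfolding S1 Kt_eq Zval using Zg_pos cP_pos by (simp add: field_simps)
    finally show ?thesis .
  qed
  show ?thesis
    using rint Zpos Usc Ueq L1 R1 L2 R2 unfolding Z_def[symmetric] by auto
qed

end


theorem lemma5p1:
  fixes N s :: nat and \<alpha> \<beta> :: real and t :: "nat \<Rightarrow> real"
  assumes "0 < s" and "0 < N" and "s dvd N"
    and "\<beta> > 2 * \<alpha>" and "\<alpha> > 0" and "\<beta> + 2 * \<alpha> < 1"
  defines "A \<equiv> coupling_mat s \<beta> \<alpha>"
  defines "R \<equiv> mat_inv s (mat_sqrt s (mat_sub s A (mat_mul s A A)))"
  defines "C \<equiv> mat_mul s A R"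
  defines "Z\<rho> \<equiv> integral\<^sup>L (lebesgue_vec s) (rho_unnorm N s C)"
  defines "lhs_fun \<equiv> (\<lambda>z. \<Sum>\<sigma>\<in>spins N. gibbs_prob N s A \<sigma> *
              exp (\<Sum>k<s. t k * (z k + sqrt (real N / real s) * magn N s \<sigma> k)))"
  defines "rhs_fun \<equiv> (\<lambda>x. rho_unnorm N s C x / Z\<rho> * exp (\<Sum>k<s. t k * mat_vec s R x k))"
  shows "integrable (lebesgue_vec s) (rho_unnorm N s C) \<and> 0 < Z\<rho>
    \<and> (\<exists>U. strongly_convex s U \<and>
          (\<forall>x\<in>space (lebesgue_vec s). rho_unnorm N s C x / Z\<rho> = exp (- U x)))
    \<and> integrable (gauss_vec s (mat_inv s A)) lhs_fun
    \<and> integrable (lebesgue_vec s) rhs_fun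
    \<and> integral\<^sup>L (gauss_vec s (mat_inv s A)) lhs_fun = integral\<^sup>L (lebesgue_vec s) rhs_fun"
proof -
  interpret m: main N s \<alpha> \<beta>
    by unfold_locales (use assms(1-6) in auto)
  have hA: "A = m.A" by (simp add: A_def m.A_def)
  have hR: "R = m.R" unfolding R_def hA m.sqrt_S m.inv_S ..
  have hC: "C = m.CC" unfolding C_def hA hR m.CC_def ..
  show ?thesis
    using m.final[of t] unfolding Z\<rho>_def lhs_fun_def rhs_fun_def hA hR hC .
qed


end
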